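(* Let $d\ge2$, $r\ge1$, $l_1,\dots,l_r\in\{1,\dots,d\}$ with $\sum_{j=1}^r l_j\le d$, and $l=d-\sum_{j=1}^r(l_j-1)$. Let $A\in\mathbf S(d;l_1,\dots,l_r)$ have a spectral decomposition $A=PDP^*$ with $P\in\mathbf O(d)$ and $D$ a real diagonal $d\times d$ matrix, and suppose $A$ has exactly $l$ distinct eigenvalues. Then for every $\varepsilon>0$ there is $\delta>0$ such that for every $B\in\mathbf S(d;l_1,\dots,l_r)$ with $\max_{1\le i,j\le d}|A_{i,j}-B_{i,j}|<\delta$, the matrix $B$ has exactly $l$ distinct eigenvalues and admits a spectral decomposition $B=QFQ^*$ with $Q\in\mathbf O(d)$, $F$ real diagonal, such that $\max_{1\le i\le d}|D_{i,i}-F_{i,i}|<\varepsilon$ and $\max_{1\le i,j\le d}|Q_{i,j}-P_{i,j}|<\varepsilon$.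
   Context: $\mathbf O(d)$ is the group of real orthogonal $d\times d$ matrices. For a real symmetric $d\times d$ matrix $x$ let $E_1(x)\le\cdots\le E_d(x)$ be its eigenvalues. $\mathbf S(d;l_1,\dots,l_r)$ is the set of real symmetric $d\times d$ matrices $x$ for which there exist pairwise disjoint $J_1,\dots,J_r\subseteq\{1,\dots,d\}$ with $|J_j|=l_j$ such that, for each $j$, the values $E_i(x)$, $i\in J_j$, are all equal. *)

theory Defs
  imports "HOL-Analysis.Analysis" "HOL-Computational_Algebra.Polynomial" "HOL-Library.Multiset"
begin

definition charpoly :: "real^'n^'n \<Rightarrow> real poly" where
  "charpoly x = det ((\<chi> i j. if i = j then [:0, 1:] else 0) - (\<chi> i j. [:x $ i $ j:]))"

definition eig_list :: "real^'n^'n \<Rightarrow> real list" where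
  "eig_list x = sorted_list_of_multiset (proots (charpoly x))"

text \<open>E i x for i in 1..d: the i-th smallest eigenvalue (1-based).\<close>
definition E :: "nat \<Rightarrow> real^'n^'n \<Rightarrow> real" where
  "E i x = eig_list x ! (i - 1)"

definition symmetric_matrix :: "real^'n^'n \<Rightarrow> bool" where
  "symmetric_matrix x \<longleftrightarrow> transpose x = x"

definition diagonal_mat :: "real^'n^'n \<Rightarrow> bool" where
  "diagonal_mat D \<longleftrightarrow> (\<forall>i j. i \<noteq> j \<longrightarrow> D $ i $ j = 0)"

text \<open>S(d; l_1,...,l_r), with d = CARD('n), the l_j given as ls 1, ..., ls r.\<close>
definition S_set :: "nat \<Rightarrow> (nat \<Rightarrow> nat) \<Rightarrow> (real^'n^'n) set" where
  "S_set r ls = {x. symmetric_matrix x \<and>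
     (\<exists>J :: nat \<Rightarrow> nat set.
        (\<forall>j\<in>{1..r}. J j \<subseteq> {1..CARD('n)} \<and> card (J j) = ls j \<and>
            (\<forall>i\<in>J j. \<forall>i'\<in>J j. E i x = E i' x)) \<and>
        (\<forall>j\<in>{1..r}. \<forall>j'\<in>{1..r}. j \<noteq> j' \<longrightarrow> J j \<inter> J j' = {}))}"

definition num_distinct_eigs :: "real^'n^'n \<Rightarrow> nat" where
  "num_distinct_eigs x = card (set (eig_list x))"

end

theory Submission
  imports Defs
begin


lemma orth_cols:
  fixes C :: "real^'n^'n"
  assumes "orthogonal_matrix C"
  shows "(\<Sum>i\<in>UNIV. C$i$j * C$i$j') = (if j = j' then 1 else 0)"
proof -
  have "(transpose C ** C)$j$j' = (mat 1 :: real^'n^'n)$j$j'"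
    using assms unfolding orthogonal_matrix_def by simp
  then show ?thesis by (simp add: matrix_matrix_mult_def transpose_def mat_def)
qed

lemma orth_rows:
  fixes C :: "real^'n^'n"
  assumes "orthogonal_matrix C"
  shows "(\<Sum>j\<in>UNIV. C$i$j * C$i'$j) = (if i = i' then 1 else 0)"
proof -
  have "(C ** transpose C)$i$i' = (mat 1 :: real^'n^'n)$i$i'"
    using assms unfolding orthogonal_matrix_def by simp
  then show ?thesis by (simp add: matrix_matrix_mult_def transpose_def mat_def)
qed

lemma orth_bound:
  fixes C :: "real^'n^'n"
  assumes "orthogonal_matrix C"
  shows "\<bar>C$i$j\<bar> \<le> 1"
proof -
  have "C$i$j * C$i$j \<le> (\<Sum>i'\<in>UNIV. C$i'$j * C$i'$j)"
    by (rule member_le_sum) auto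
  also have "\<dots> = 1" using orth_cols[OF assms, of j j] by simp
  finally have "\<bar>C$i$j\<bar>^2 \<le> 1^2" by (simp add: power2_eq_square)
  then show ?thesis using power2_le_imp_le[of "\<bar>C$i$j\<bar>" 1] by simp
qed

lemma diag_mult_left:
  fixes F M :: "real^'n^'n"
  assumes "diagonal_mat F"
  shows "(F ** M)$i$j = F$i$i * M$i$j"
proof -
  have "(F ** M)$i$j = (\<Sum>k\<in>UNIV. F$i$k * M$k$j)" by (simp add: matrix_matrix_mult_def)
  also have "\<dots> = (\<Sum>k\<in>UNIV. if k = i then F$i$i * M$i$j else 0)"
    by (rule sum.cong) (use assms in \<open>auto simp: diagonal_mat_def\<close>)
  finally show ?thesis by simp
qed

lemma diag_mult_right:
  fixes F M :: "real^'n^'n"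
  assumes "diagonal_mat F"
  shows "(M ** F)$i$j = M$i$j * F$j$j"
proof -
  have "(M ** F)$i$j = (\<Sum>k\<in>UNIV. M$i$k * F$k$j)" by (simp add: matrix_matrix_mult_def)
  also have "\<dots> = (\<Sum>k\<in>UNIV. if k = j then M$i$j * F$j$j else 0)"
    by (rule sum.cong) (use assms in \<open>auto simp: diagonal_mat_def\<close>)
  finally show ?thesis by simp
qed

lemma perturb:
  fixes C H D0 X :: "real^'n^'n"
  assumes C: "orthogonal_matrix C" and H: "diagonal_mat H" and D0: "diagonal_mat D0"
    and X: "X = C ** H ** transpose C" and b: "\<forall>i j. \<bar>X$i$j - D0$i$j\<bar> \<le> \<eta>"
  shows "\<bar>D0$i$i - H$j$j\<bar> * \<bar>C$i$j\<bar> \<le> real CARD('n) * \<eta>"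
proof -
  have CC: "transpose C ** C = mat 1" using C unfolding orthogonal_matrix_def by simp
  have "X ** C = (C ** H) ** (transpose C ** C)"
    unfolding X by (simp only: matrix_mul_assoc)
  then have XC: "X ** C = C ** H" by (simp add: CC)
  have "(X ** C)$i$j = C$i$j * H$j$j" using XC diag_mult_right[OF H] by simp
  moreover have "(D0 ** C)$i$j = D0$i$i * C$i$j" using diag_mult_left[OF D0] by simp
  ultimately have "(H$j$j - D0$i$i) * C$i$j = (\<Sum>p\<in>UNIV. (X$i$p - D0$i$p) * C$p$j)"
    by (simp add: matrix_matrix_mult_def algebra_simps sum_subtractf)
  note eq = this
  have "\<bar>D0$i$i - H$j$j\<bar> * \<bar>C$i$j\<bar> = \<bar>(H$j$j - D0$i$i) * C$i$j\<bar>"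
    by (subst abs_minus_commute) (simp add: abs_mult)
  also have "\<dots> = \<bar>\<Sum>p\<in>UNIV. (X$i$p - D0$i$p) * C$p$j\<bar>" using eq by simp
  also have "\<dots> \<le> (\<Sum>p\<in>UNIV. \<bar>(X$i$p - D0$i$p) * C$p$j\<bar>)" by (rule sum_abs)
  also have "\<dots> \<le> (\<Sum>p\<in>(UNIV::'n set). \<eta>)"
  proof (rule sum_mono)
    fix p
    have "\<bar>(X$i$p - D0$i$p) * C$p$j\<bar> = \<bar>X$i$p - D0$i$p\<bar> * \<bar>C$p$j\<bar>" by (simp add: abs_mult)
    also have "\<dots> \<le> \<eta> * 1"
      using b orth_bound[OF C] by (meson abs_ge_zero mult_mono order_trans)
    finally show "\<bar>(X$i$p - D0$i$p) * C$p$j\<bar> \<le> \<eta>" by simp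
  qed
  finally show ?thesis by simp
qed


lemma sym_inner:
  fixes B :: "real^'n^'n"
  assumes "transpose B = B"
  shows "v \<bullet> (B *v u) = (B *v v) \<bullet> u"
proof -
  have "v \<bullet> (B *v u) = (\<Sum>i\<in>UNIV. \<Sum>k\<in>UNIV. v$i * B$i$k * u$k)"
    by (simp add: inner_vec_def matrix_vector_mult_def sum_distrib_left mult.assoc)
  also have "\<dots> = (\<Sum>k\<in>UNIV. \<Sum>i\<in>UNIV. v$i * B$i$k * u$k)" by (rule sum.swap)
  also have "\<dots> = (\<Sum>k\<in>UNIV. (\<Sum>i\<in>UNIV. B$k$i * v$i) * u$k)"
  proof -
    have BB: "\<And>i k. B$i$k = B$k$i" using assms by (metis transpose_def vec_lambda_beta)
    show ?thesis unfolding sum_distrib_right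
      by (rule sum.cong[OF refl], rule sum.cong[OF refl]) (simp add: BB)
  qed
  also have "\<dots> = (B *v v) \<bullet> u"
    by (simp add: inner_vec_def matrix_vector_mult_def)
  finally show ?thesis .
qed

lemma quad_zero:
  fixes a b :: real
  assumes "a \<ge> 0" and "\<forall>t. a * t + b * t^2 \<le> 0"
  shows "a = 0"
proof (rule ccontr)
  assume "a \<noteq> 0" then have a: "a > 0" using assms by simp
  define t where "t = a / (\<bar>b\<bar> + 1)"
  have t: "t > 0" using a by (simp add: t_def)
  have "b * t^2 \<ge> - \<bar>b\<bar> * t^2"
    by (metis abs_ge_minus_self abs_mult_pos mult_minus_left mult_right_mono zero_le_power2 abs_ge_zero minus_le_iff)
  moreover have "a * t - \<bar>b\<bar> * t^2 = t * (a - \<bar>b\<bar> * t)" by (simp add: power2_eq_square algebra_simps)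
  moreover have "a - \<bar>b\<bar> * t = t" by (simp add: t_def field_simps)
  ultimately have "a * t + b * t^2 \<ge> t * t" by (metis add_le_cancel_left diff_conv_add_uminus mult_minus_left)
  moreover have "t * t > 0" using t by simp
  ultimately show False using assms(2) by (meson not_le order_less_le_trans)
qed

lemma eig_step:
  fixes B :: "real^'n^'n" and V :: "(real^'n) set"
  assumes sym: "transpose B = B" and fin: "finite V" and cV: "card V < CARD('n)"
    and eV: "\<forall>v\<in>V. \<exists>\<mu>. B *v v = \<mu> *\<^sub>R v"
  shows "\<exists>u. norm u = 1 \<and> (\<exists>\<mu>. B *v u = \<mu> *\<^sub>R u) \<and> (\<forall>v\<in>V. v \<bullet> u = 0)"
proof -
  have "dim V < DIM(real^'n)" using dim_le_card'[OF fin] cV by simp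
  then obtain x :: "real^'n" where x0: "x \<noteq> 0" and xo: "\<And>y. y \<in> span V \<Longrightarrow> orthogonal x y"
    using orthogonal_to_subspace_exists by blast
  define S where "S = {x::real^'n. \<forall>v\<in>V. v \<bullet> x = 0}"
  have xS: "x \<in> S" using xo unfolding S_def orthogonal_def
    by (simp add: inner_commute span_base)
  have Ssub: "y - z \<in> S" "y + z \<in> S" "c *\<^sub>R y \<in> S" if "y \<in> S" "z \<in> S" for y z c
    using that by (auto simp: S_def inner_diff_right inner_add_right)
  have clS: "closed S"
  proof -
    have "S = (\<Inter>v\<in>V. {x. v \<bullet> x = 0})" by (auto simp: S_def)
    moreover have "closed {x::real^'n. v \<bullet> x = 0}" for v
      using closed_hyperplane[of v 0] by simp
    ultimately show ?thesis by auto
  qed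
  define T where "T = S \<inter> sphere 0 1"
  have cT: "compact T" unfolding T_def using clS compact_sphere by (simp add: closed_Int_compact)
  have "(1 / norm x) *\<^sub>R x \<in> T" using Ssub(3)[OF xS xS] x0 by (simp add: T_def)
  then have neT: "T \<noteq> {}" by blast
  define f where "f = (\<lambda>x::real^'n. x \<bullet> (B *v x))"
  have cf: "continuous_on T f" unfolding f_def
    by (intro continuous_intros linear_continuous_on) (auto intro: bounded_linear_intros)
  obtain u where uT: "u \<in> T" and umax: "\<forall>y\<in>T. f y \<le> f u"
    using continuous_attains_sup[OF cT neT cf] by blast
  define lam where "lam = f u"
  have uS: "u \<in> S" and nu: "norm u = 1" using uT by (auto simp: T_def)
  have uu: "u \<bullet> u = 1" using nu by (simp add: norm_eq_1)
  have bound: "f y \<le> lam * (y \<bullet> y)" if yS: "y \<in> S" for y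
  proof (cases "y = 0")
    case True then show ?thesis by (simp add: f_def)
  next
    case False
    define y' where "y' = (1 / norm y) *\<^sub>R y"
    have "y' \<in> T" using Ssub(3)[OF yS yS] False by (simp add: T_def y'_def)
    then have "f y' \<le> lam" using umax lam_def by simp
    moreover have "f y' = f y / (norm y)^2"
      by (simp add: f_def y'_def matrix_vector_mult_scaleR power2_eq_square)
    moreover have "(norm y)^2 = y \<bullet> y" by (simp add: power2_norm_eq_inner)
    moreover have "norm y > 0" using False by simp
    ultimately show ?thesis by (simp add: divide_le_eq mult.commute)
  qed
  have "\<forall>v\<in>V. v \<bullet> (B *v u) = 0"
  proof
    fix v assume vV: "v \<in> V"
    then obtain \<mu> where "B *v v = \<mu> *\<^sub>R v" using eV by blast
    then have "v \<bullet> (B *v u) = \<mu> * (v \<bullet> u)" using sym_inner[OF sym, of v u] by simp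
    also have "v \<bullet> u = 0" using uS vV by (simp add: S_def)
    finally show "v \<bullet> (B *v u) = 0" by simp
  qed
  then have BuS: "B *v u \<in> S" by (simp add: S_def)
  define w where "w = B *v u - lam *\<^sub>R u"
  have wS: "w \<in> S" unfolding w_def using Ssub BuS uS by blast
  have lamdef: "lam = u \<bullet> (B *v u)" by (simp add: lam_def f_def)
  have wu: "w \<bullet> u = 0" unfolding w_def using lamdef uu
    by (simp add: inner_diff_left inner_commute[of "B *v u" u])
  have wBu: "w \<bullet> (B *v u) = w \<bullet> w"
  proof -
    have "B *v u = w + lam *\<^sub>R u" by (simp add: w_def)
    then show ?thesis using wu by (simp add: inner_add_right inner_commute)
  qed
  have uBw: "u \<bullet> (B *v w) = w \<bullet> w"
    using sym_inner[OF sym, of u w] wBu by (simp add: inner_commute)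
  have "2 * (w \<bullet> w) * t + (w \<bullet> (B *v w) - lam * (w \<bullet> w)) * t^2 \<le> 0" for t
  proof -
    have yS: "u + t *\<^sub>R w \<in> S" using Ssub uS wS by blast
    have "f (u + t *\<^sub>R w) = lam + 2 * t * (w \<bullet> w) + t^2 * (w \<bullet> (B *v w))"
      using uBw wBu lamdef
      by (simp add: f_def matrix_vector_right_distrib matrix_vector_mult_scaleR inner_add_left
          inner_add_right power2_eq_square algebra_simps)
    moreover have "(u + t *\<^sub>R w) \<bullet> (u + t *\<^sub>R w) = 1 + t^2 * (w \<bullet> w)"
      using uu wu by (simp add: inner_add_left inner_add_right inner_commute power2_eq_square)
    ultimately have "lam + 2 * t * (w \<bullet> w) + t^2 * (w \<bullet> (B *v w)) \<le> lam * (1 + t^2 * (w \<bullet> w))"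
      using bound[OF yS] by simp
    then show ?thesis by (simp add: algebra_simps)
  qed
  then have "2 * (w \<bullet> w) = 0"
    using quad_zero[of "2 * (w \<bullet> w)" "w \<bullet> (B *v w) - lam * (w \<bullet> w)"] by simp
  then have "w = 0" by simp
  then have "B *v u = lam *\<^sub>R u" by (simp add: w_def)
  moreover have "\<forall>v\<in>V. v \<bullet> u = 0" using uS by (simp add: S_def)
  ultimately show ?thesis using nu by blast
qed


lemma exists_eig_set:
  fixes B :: "real^'n^'n"
  assumes sym: "transpose B = B"
  shows "k \<le> CARD('n) \<Longrightarrow> \<exists>V. finite V \<and> card V = k \<and> (\<forall>v\<in>V. norm v = 1 \<and> (\<exists>\<mu>. B *v v = \<mu> *\<^sub>R v))
      \<and> (\<forall>v\<in>V. \<forall>v'\<in>V. v \<noteq> v' \<longrightarrow> v \<bullet> v' = 0)"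
proof (induction k)
  case 0
  show ?case by (rule exI[of _ "{}"]) simp
next
  case (Suc k)
  then obtain V where V: "finite V" "card V = k" "\<forall>v\<in>V. norm v = 1 \<and> (\<exists>\<mu>. B *v v = \<mu> *\<^sub>R v)"
    "\<forall>v\<in>V. \<forall>v'\<in>V. v \<noteq> v' \<longrightarrow> v \<bullet> v' = 0" by auto
  obtain u where u: "norm u = 1" "\<exists>\<mu>. B *v u = \<mu> *\<^sub>R u" "\<forall>v\<in>V. v \<bullet> u = 0"
    using eig_step[OF sym V(1)] V Suc.prems by auto
  have uV: "u \<notin> V"
  proof
    assume "u \<in> V" then have "u \<bullet> u = 0" using u(3) by blast
    then show False using u(1) by simp
  qed
  show ?case
    apply (rule exI[of _ "insert u V"])
    using V u uV by (auto simp: inner_commute)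
qed

theorem spectral:
  fixes B :: "real^'n^'n"
  assumes "symmetric_matrix B"
  shows "\<exists>Q F. orthogonal_matrix Q \<and> diagonal_mat F \<and> B = Q ** F ** transpose Q"
proof -
  have sym: "transpose B = B" using assms by (simp add: symmetric_matrix_def)
  obtain V where V: "finite V" "card V = CARD('n)" "\<forall>v\<in>V. norm v = 1 \<and> (\<exists>\<mu>. B *v v = \<mu> *\<^sub>R v)"
    "\<forall>v\<in>V. \<forall>v'\<in>V. v \<noteq> v' \<longrightarrow> v \<bullet> v' = 0"
    using exists_eig_set[OF sym, of "CARD('n)"] by auto
  obtain b where b: "bij_betw b (UNIV::'n set) V"
    using finite_same_card_bij[of "UNIV::'n set" V] V by auto
  have bV: "b j \<in> V" for j using b by (auto simp: bij_betw_def)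
  have binj: "b j = b j' \<Longrightarrow> j = j'" for j j' using b by (auto simp: bij_betw_def inj_def)
  define lam where "lam j = b j \<bullet> (B *v b j)" for j
  have eig: "B *v b j = lam j *\<^sub>R b j" for j
  proof -
    obtain \<mu> where mu: "B *v b j = \<mu> *\<^sub>R b j" using V(3) bV by blast
    have "b j \<bullet> b j = 1" using V(3) bV by (simp add: norm_eq_1)
    then have "lam j = \<mu>" by (simp add: lam_def mu)
    then show ?thesis using mu by simp
  qed
  define Q :: "real^'n^'n" where "Q = (\<chi> i j. b j $ i)"
  define F :: "real^'n^'n" where "F = (\<chi> i j. if i = j then lam i else 0)"
  have dF: "diagonal_mat F" by (simp add: diagonal_mat_def F_def)
  have inn: "b j \<bullet> b j' = (if j = j' then 1 else 0)" for j j'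
    using V(3,4) bV[of j] bV[of j'] binj[of j j'] by (auto simp: norm_eq_1)
  have "transpose Q ** Q = mat 1"
  proof -
    have "(transpose Q ** Q)$j$j' = (mat 1 :: real^'n^'n)$j$j'" for j j'
      using inn[of j j'] by (simp add: matrix_matrix_mult_def transpose_def Q_def inner_vec_def mat_def)
    then show ?thesis by (simp add: vec_eq_iff)
  qed
  then have oQ: "orthogonal_matrix Q" by (simp add: orthogonal_matrix)
  have BQ: "B ** Q = Q ** F"
  proof -
    have "(B ** Q)$i$j = (Q ** F)$i$j" for i j
    proof -
      have "(B ** Q)$i$j = (B *v b j)$i"
        by (simp add: matrix_matrix_mult_def matrix_vector_mult_def Q_def)
      also have "\<dots> = lam j * b j $ i" using eig by simp
      also have "\<dots> = (Q ** F)$i$j" using diag_mult_right[OF dF, of Q i j] by (simp add: Q_def F_def)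
      finally show ?thesis .
    qed
    then show ?thesis by (simp add: vec_eq_iff)
  qed
  have "B = B ** (Q ** transpose Q)" using oQ by (simp add: orthogonal_matrix_def)
  also have "\<dots> = Q ** F ** transpose Q" by (simp add: matrix_mul_assoc BQ)
  finally show ?thesis using oQ dF by blast
qed


lemma conj_diag_entry:
  fixes Q G :: "real^'n^'n"
  assumes "diagonal_mat G"
  shows "(Q ** G ** transpose Q)$i$j = (\<Sum>k\<in>UNIV. Q$i$k * G$k$k * Q$j$k)"
  using diag_mult_right[OF assms, of Q]
  by (simp add: matrix_matrix_mult_def transpose_def)

lemma poly_det:
  fixes M :: "real poly^'n^'n"
  shows "poly (det M) t = det (\<chi> i j. poly (M$i$j) t)"
  by (simp add: det_def poly_sum poly_prod)

lemma charpoly_conj: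
  fixes Q F B :: "real^'n^'n"
  assumes oQ: "orthogonal_matrix Q" and dF: "diagonal_mat F" and BQ: "B = Q ** F ** transpose Q"
  shows "charpoly B = (\<Prod>j\<in>UNIV. [:- F$j$j, 1:])"
proof -
  have "poly (charpoly B) t = poly (\<Prod>j\<in>UNIV. [:- F$j$j, 1:]) t" for t
  proof -
    define G :: "real^'n^'n" where "G = (\<chi> i j. if i = j then t - F$i$i else 0)"
    have dG: "diagonal_mat G" by (simp add: G_def diagonal_mat_def)
    have ev: "(\<chi> i j. poly (((\<chi> i j. if i = j then [:0, 1:] else 0) - (\<chi> i j. [:B $ i $ j:]) :: real poly^'n^'n)$i$j) t)
        = Q ** G ** transpose Q"
    proof -
      have "(Q ** G ** transpose Q)$i$j = (if i = j then t else 0) - B$i$j" for i j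
      proof -
        have "(Q ** G ** transpose Q)$i$j = (\<Sum>k\<in>UNIV. t * (Q$i$k * Q$j$k) - Q$i$k * F$k$k * Q$j$k)"
          unfolding conj_diag_entry[OF dG] by (rule sum.cong) (auto simp: G_def algebra_simps)
        also have "\<dots> = t * (\<Sum>k\<in>UNIV. Q$i$k * Q$j$k) - (\<Sum>k\<in>UNIV. Q$i$k * F$k$k * Q$j$k)"
          by (simp add: sum_subtractf sum_distrib_left)
        also have "\<dots> = (if i = j then t else 0) - B$i$j"
          using orth_rows[OF oQ, of i j] conj_diag_entry[OF dF, of Q i j] BQ by simp
        finally show ?thesis .
      qed
      then show ?thesis by (simp add: vec_eq_iff)
    qed
    have dQ: "det Q * det Q = 1"
    proof -
      have "det (Q ** transpose Q) = 1" using oQ by (simp add: orthogonal_matrix_def)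
      then show ?thesis by (simp add: det_mul)
    qed
    have "poly (charpoly B) t = det (Q ** G ** transpose Q)"
      unfolding charpoly_def poly_det ev ..
    also have "\<dots> = det G * (det Q * det Q)" by (simp add: det_mul)
    also have "\<dots> = det G" using dQ by simp
    also have "\<dots> = (\<Prod>j\<in>UNIV. t - F$j$j)" by (subst det_diagonal) (auto simp: G_def)
    also have "\<dots> = poly (\<Prod>j\<in>UNIV. [:- F$j$j, 1:]) t" by (simp add: poly_prod)
    finally show ?thesis .
  qed
  then show ?thesis using poly_eq_poly_eq_iff by blast
qed

lemma msum_singles:
  assumes "finite A"
  shows "size (\<Sum>j\<in>A. {#f j#}) = card A \<and> set_mset (\<Sum>j\<in>A. {#f j#}) = f ` A"
  using assms by (induction A rule: finite_induct) auto

lemma length_sl: "length (sorted_list_of_multiset M) = size M"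
  by (metis size_mset mset_sorted_list_of_multiset)

lemma eig_conj:
  fixes Q F B :: "real^'n^'n"
  assumes oQ: "orthogonal_matrix Q" and dF: "diagonal_mat F" and BQ: "B = Q ** F ** transpose Q"
  shows "set (eig_list B) = range (\<lambda>j. F$j$j)" and "length (eig_list B) = CARD('n)"
proof -
  have "proots (charpoly B) = (\<Sum>j\<in>UNIV. {#F$j$j#})"
    unfolding charpoly_conj[OF assms]
    by (subst proots_prod) (auto)
  then show "set (eig_list B) = range (\<lambda>j. F$j$j)" and "length (eig_list B) = CARD('n)"
    using msum_singles[of "UNIV::'n set" "\<lambda>j. F$j$j"]
    by (simp_all add: eig_list_def length_sl)
qed


lemma S_card:
  fixes B :: "real^'n^'n"
  assumes BS: "B \<in> S_set r ls" and len: "length (eig_list B) = CARD('n)"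
    and ls1: "\<forall>j\<in>{1..r}. ls j \<ge> 1"
    and l: "int l = int CARD('n) - (\<Sum>j=1..r. (int (ls j) - 1))"
  shows "card (set (eig_list B)) \<le> l"
proof -
  obtain J :: "nat \<Rightarrow> nat set" where
    J1: "\<forall>j\<in>{1..r}. J j \<subseteq> {1..CARD('n)} \<and> card (J j) = ls j \<and> (\<forall>i\<in>J j. \<forall>i'\<in>J j. E i B = E i' B)"
    and J2: "\<forall>j\<in>{1..r}. \<forall>j'\<in>{1..r}. j \<noteq> j' \<longrightarrow> J j \<inter> J j' = {}"
    using BS unfolding S_set_def by blast
  define U where "U = {1..CARD('n)}"
  have Jsub: "J j \<subseteq> U" and Jcard: "card (J j) = ls j" and Jeq: "\<forall>i\<in>J j. \<forall>i'\<in>J j. E i B = E i' B"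
    if "j \<in> {1..r}" for j using J1 that unfolding U_def by blast+
  define f where "f i = E i B" for i
  define JA where "JA = (\<Union>j\<in>{1..r}. J j)"
  have finJ: "finite (J j)" if "j \<in> {1..r}" for j using Jsub[OF that] finite_subset unfolding U_def by blast
  have sub: "set (eig_list B) \<subseteq> f ` U"
  proof
    fix x assume "x \<in> set (eig_list B)"
    then obtain k where k: "k < length (eig_list B)" "eig_list B ! k = x" by (auto simp: in_set_conv_nth)
    then have "Suc k \<in> U" "f (Suc k) = x" using len by (auto simp: U_def f_def E_def)
    then show "x \<in> f ` U" by blast
  qed
  have JAU: "JA \<subseteq> U" using Jsub unfolding JA_def by blast
  have "f ` U \<subseteq> f ` (U - JA) \<union> (\<Union>j\<in>{1..r}. f ` J j)" by (auto simp: JA_def)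
  then have c0: "card (f ` U) \<le> card (f ` (U - JA) \<union> (\<Union>j\<in>{1..r}. f ` J j))"
    by (rule card_mono[rotated]) (auto simp: U_def finJ)
  have c2: "card (f ` (U - JA) \<union> (\<Union>j\<in>{1..r}. f ` J j)) \<le> card (f ` (U - JA)) + card (\<Union>j\<in>{1..r}. f ` J j)"
    by (rule card_Un_le)
  have c3: "card (\<Union>j\<in>{1..r}. f ` J j) \<le> (\<Sum>j=1..r. card (f ` J j))" by (rule card_UN_le) simp
  have c4: "(\<Sum>j=1..r. card (f ` J j)) \<le> (\<Sum>j=1..r. 1)"
  proof (rule sum_mono)
    fix j assume j: "j \<in> {1..r}"
    have "\<forall>i\<in>J j. \<forall>i'\<in>J j. f i = f i'" using Jeq[OF j] unfolding f_def by blast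
    then have "\<forall>x\<in>f ` J j. \<forall>y\<in>f ` J j. x = y" by blast
    then have eqv: "\<forall>x\<in>f ` J j. \<forall>y\<in>f ` J j. x = y" .
    have fin: "finite (f ` J j)" using finJ[OF j] by simp
    have "card (f ` J j) \<le> Suc 0" using iffD2[OF card_le_Suc0_iff_eq[OF fin] eqv] .
    then show "card (f ` J j) \<le> 1" by simp
  qed
  have c5: "card (f ` (U - JA)) \<le> card (U - JA)" by (rule card_image_le) (simp add: U_def)
  have c6: "card (U - JA) = card U - card JA" using JAU by (simp add: card_Diff_subset U_def finite_subset)
  have c1: "card (f ` U) \<le> card U - card JA + r" using c0 c2 c3 c4 c5 c6 by simp
  have cJA: "card JA = (\<Sum>j=1..r. ls j)"
  proof -
    have "card JA = (\<Sum>j=1..r. card (J j))" unfolding JA_def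
      by (rule card_UN_disjoint) (use finJ J2 in auto)
    also have "\<dots> = (\<Sum>j=1..r. ls j)" using Jcard by (intro sum.cong) auto
    finally show ?thesis .
  qed
  have cJAle: "card JA \<le> card U" using JAU by (intro card_mono) (auto simp: U_def)
  have "(\<Sum>j=1..r. (int (ls j) - 1)) = int (\<Sum>j=1..r. ls j) - int r"
    by (simp add: sum_subtractf)
  then have "int l = int (card U) - int (card JA) + int r" using l cJA by (simp add: U_def)
  then have "card (f ` U) \<le> l" using c1 cJAle by linarith
  moreover have "card (set (eig_list B)) \<le> card (f ` U)" using sub by (intro card_mono) (auto simp: U_def)
  ultimately show ?thesis by simp
qed


lemma card_pos_real: "real CARD('n::finite) \<ge> 1"
  using finite_UNIV_card_ge_0[where 'a='n] by simp

lemma col_big: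
  fixes C :: "real^'n^'n"
  assumes C: "orthogonal_matrix C"
  shows "\<exists>i. 1 / real CARD('n) \<le> \<bar>C$i$j\<bar>"
proof (rule ccontr)
  assume "\<not> ?thesis"
  then have lt: "\<bar>C$i$j\<bar> < 1 / real CARD('n)" for i by (simp add: not_le)
  have "C$i$j * C$i$j < (1 / real CARD('n)) * (1 / real CARD('n))" for i
    using lt[of i] by (metis abs_ge_zero abs_mult_self_eq mult_strict_mono' )
  then have "(\<Sum>i\<in>UNIV. C$i$j * C$i$j) < (\<Sum>i\<in>(UNIV::'n set). (1 / real CARD('n)) * (1 / real CARD('n)))"
    by (intro sum_strict_mono) auto
  also have "\<dots> = 1 / real CARD('n)" by simp
  also have "\<dots> \<le> 1" using card_pos_real[where 'n='n] by simp
  finally show False using orth_cols[OF C, of j j] by simp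
qed

lemma row_big:
  fixes C :: "real^'n^'n"
  assumes C: "orthogonal_matrix C"
  shows "\<exists>j. 1 / real CARD('n) \<le> \<bar>C$i$j\<bar>"
proof -
  have "orthogonal_matrix (transpose C)" using C by simp
  from col_big[OF this, of i] show ?thesis by (simp add: transpose_def)
qed


lemma simple_pert:
  fixes C H D2 X :: "real^'n^'n"
  assumes C: "orthogonal_matrix C" and H: "diagonal_mat H" and D2: "diagonal_mat D2"
   and X: "X = C ** H ** transpose C" and b: "\<forall>i j. \<bar>X$i$j - D2$i$j\<bar> \<le> \<eta>"
   and gap: "\<forall>i i'. i \<noteq> i' \<longrightarrow> \<tau> \<le> \<bar>D2$i$i - D2$i'$i'\<bar>"
   and tau: "\<tau> > 0" and e: "real CARD('n)^2 * \<eta> \<le> \<tau>/2"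
   and e4: "real CARD('n) * (2 * real CARD('n) * \<eta> / \<tau>)^2 \<le> 1/4"
  shows "\<exists>\<sigma> s. bij \<sigma> \<and> (\<forall>m. s m = 1 \<or> s m = -1)
     \<and> (\<forall>m. s m * C$m$(\<sigma> m) \<ge> 1 - real CARD('n) * (2 * real CARD('n) * \<eta> / \<tau>)^2)
     \<and> (\<forall>i m. i \<noteq> m \<longrightarrow> \<bar>C$i$(\<sigma> m)\<bar> \<le> 2 * real CARD('n) * \<eta> / \<tau>)"
proof -
  define d where "d = real CARD('n)"
  define e4 where "e4 = 2 * d * \<eta> / \<tau>"
  have d1: "d \<ge> 1" unfolding d_def by (rule card_pos_real)
  have P: "\<bar>D2$i$i - H$j$j\<bar> * \<bar>C$i$j\<bar> \<le> d * \<eta>" for i j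
    unfolding d_def by (rule perturb[OF C H D2 X b])
  define \<pi> where "\<pi> j = (SOME i. 1 / d \<le> \<bar>C$i$j\<bar>)" for j
  have pibig: "1 / d \<le> \<bar>C$(\<pi> j)$j\<bar>" for j
    unfolding \<pi>_def d_def using col_big[OF C, of j] by (rule someI_ex)
  have close: "\<bar>D2$(\<pi> j)$(\<pi> j) - H$j$j\<bar> \<le> d^2 * \<eta>" for j
  proof -
    have "\<bar>D2$(\<pi> j)$(\<pi> j) - H$j$j\<bar> * (1/d) \<le> \<bar>D2$(\<pi> j)$(\<pi> j) - H$j$j\<bar> * \<bar>C$(\<pi> j)$j\<bar>"
      using pibig[of j] by (intro mult_left_mono) auto
    also have "\<dots> \<le> d * \<eta>" by (rule P)
    finally have "\<bar>D2$(\<pi> j)$(\<pi> j) - H$j$j\<bar> \<le> d * \<eta> * d" using d1 by (simp add: divide_le_eq)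
    then show ?thesis by (simp add: power2_eq_square mult_ac)
  qed
  have small: "\<bar>C$i$j\<bar> \<le> e4" if "i \<noteq> \<pi> j" for i j
  proof -
    have "\<tau> \<le> \<bar>D2$i$i - D2$(\<pi> j)$(\<pi> j)\<bar>" using gap that by blast
    then have "\<tau>/2 \<le> \<bar>D2$i$i - H$j$j\<bar>" using close[of j] e unfolding d_def by linarith
    then have "\<tau>/2 * \<bar>C$i$j\<bar> \<le> \<bar>D2$i$i - H$j$j\<bar> * \<bar>C$i$j\<bar>" by (intro mult_right_mono) auto
    also have "\<dots> \<le> d * \<eta>" by (rule P)
    finally show ?thesis using tau unfolding e4_def by (simp add: field_simps)
  qed
  have sq_small: "C$i$j * C$i$j \<le> e4^2" if "i \<noteq> \<pi> j" for i j
  proof -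
    have "\<bar>C$i$j\<bar>^2 \<le> e4^2" using small[OF that] by (intro power_mono) auto
    then show ?thesis by (simp add: power2_eq_square)
  qed
  have diagsq: "C$(\<pi> j)$j * C$(\<pi> j)$j \<ge> 1 - d * e4^2" for j
  proof -
    have "1 = (\<Sum>i\<in>UNIV. C$i$j * C$i$j)" using orth_cols[OF C, of j j] by simp
    also have "\<dots> = C$(\<pi> j)$j * C$(\<pi> j)$j + (\<Sum>i\<in>UNIV - {\<pi> j}. C$i$j * C$i$j)"
      by (simp add: sum.remove)
    also have "(\<Sum>i\<in>UNIV - {\<pi> j}. C$i$j * C$i$j) \<le> (\<Sum>i\<in>UNIV - {\<pi> j}. e4^2)"
      by (rule sum_mono) (use sq_small in auto)
    also have "\<dots> = real (card (UNIV - {\<pi> j})) * e4^2" by simp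
    also have "\<dots> \<le> d * e4^2"
      unfolding d_def by (intro mult_right_mono) (auto simp: card_Diff_subset)
    finally show ?thesis by simp
  qed
  have e4s: "d * e4^2 \<le> 1/4" using e4 unfolding d_def e4_def .
  have absbig: "\<bar>C$(\<pi> j)$j\<bar> \<ge> 1 - d * e4^2" for j
  proof -
    have "\<bar>C$(\<pi> j)$j\<bar> \<le> 1" by (rule orth_bound[OF C])
    then have "\<bar>C$(\<pi> j)$j\<bar> * \<bar>C$(\<pi> j)$j\<bar> \<le> \<bar>C$(\<pi> j)$j\<bar> * 1"
      by (intro mult_left_mono) auto
    then show ?thesis using diagsq[of j] by (simp add: abs_mult_self_eq)
  qed
  have injpi: "inj \<pi>"
  proof (rule injI, rule ccontr)
    fix j j' assume eq: "\<pi> j = \<pi> j'" and ne: "j \<noteq> j'"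
    define i where "i = \<pi> j"
    have "(\<Sum>k\<in>{j, j'}. C$i$k * C$i$k) \<le> (\<Sum>k\<in>UNIV. C$i$k * C$i$k)"
      by (rule sum_mono2) auto
    also have "\<dots> = 1" using orth_rows[OF C, of i i] by simp
    finally have "C$i$j * C$i$j + C$i$j' * C$i$j' \<le> 1" using ne by simp
    moreover have "C$i$j * C$i$j \<ge> 3/4" using diagsq[of j] e4s unfolding i_def by linarith
    moreover have "C$i$j' * C$i$j' \<ge> 3/4" using diagsq[of j'] e4s unfolding i_def eq by linarith
    ultimately show False by linarith
  qed
  have surjpi: "surj \<pi>" using injpi finite_UNIV_inj_surj[of \<pi>] by simp
  define \<sigma> where "\<sigma> = inv \<pi>"
  have bs: "bij \<sigma>" unfolding \<sigma>_def using injpi surjpi by (intro bij_imp_bij_inv) (simp add: bij_def)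
  have pis: "\<pi> (\<sigma> m) = m" for m unfolding \<sigma>_def using surjpi by (rule surj_f_inv_f)
  define s where "s m = (if C$m$(\<sigma> m) \<ge> 0 then 1 else (-1::real))" for m
  have s1: "\<forall>m. s m = 1 \<or> s m = -1" by (simp add: s_def)
  have s2: "\<forall>m. s m * C$m$(\<sigma> m) \<ge> 1 - d * e4^2"
  proof
    fix m
    have "s m * C$m$(\<sigma> m) = \<bar>C$(\<pi> (\<sigma> m))$(\<sigma> m)\<bar>" by (simp add: s_def pis)
    then show "s m * C$m$(\<sigma> m) \<ge> 1 - d * e4^2" using absbig[of "\<sigma> m"] by simp
  qed
  have s3: "\<forall>i m. i \<noteq> m \<longrightarrow> \<bar>C$i$(\<sigma> m)\<bar> \<le> e4"
    using small pis by metis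
  show ?thesis using bs s1 s2 s3 unfolding d_def e4_def by blast
qed


lemma signed_perm:
  fixes \<sigma> :: "'n::finite \<Rightarrow> 'n" and s :: "'n \<Rightarrow> real" and S :: "real^'n^'n"
  assumes bs: "bij \<sigma>" and s: "\<forall>m. s m = 1 \<or> s m = -1"
    and S: "S = (\<chi> j m. if j = \<sigma> m then s m else 0)"
  shows "orthogonal_matrix S"
    and "\<And>M. diagonal_mat M \<Longrightarrow> diagonal_mat (transpose S ** M ** S)"
    and "\<And>(C::real^'n^'n) i m. (C ** S)$i$m = C$i$(\<sigma> m) * s m"
proof -
  have inj: "\<sigma> m = \<sigma> m' \<longleftrightarrow> m = m'" for m m' using bs by (auto simp: bij_def inj_def)
  have ss: "s m * s m = 1" for m using s[rule_format, of m] by auto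
  show CS: "(C ** S)$i$m = C$i$(\<sigma> m) * s m" for C :: "real^'n^'n" and i m
  proof -
    have "(C ** S)$i$m = (\<Sum>j\<in>UNIV. if j = \<sigma> m then C$i$j * s m else 0)"
      by (simp add: matrix_matrix_mult_def S if_distrib cong: if_cong)
    then show ?thesis by simp
  qed
  have "(transpose S ** S)$m$m' = (mat 1 :: real^'n^'n)$m$m'" for m m'
  proof -
    have "(transpose S ** S)$m$m' = (\<Sum>j\<in>UNIV. (if j = \<sigma> m then s m else 0) * (if j = \<sigma> m' then s m' else 0))"
      by (simp add: matrix_matrix_mult_def transpose_def S)
    also have "\<dots> = (\<Sum>j\<in>UNIV. if j = \<sigma> m then (if \<sigma> m = \<sigma> m' then s m * s m' else 0) else 0)"
      by (rule sum.cong) auto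
    finally have "(transpose S ** S)$m$m' = (\<Sum>j\<in>UNIV. if j = \<sigma> m then (if \<sigma> m = \<sigma> m' then s m * s m' else 0) else 0)" .
    then show ?thesis using inj[of m m'] ss[of m] ss[of m'] by (simp add: mat_def)
  qed
  then show "orthogonal_matrix S" by (simp add: orthogonal_matrix vec_eq_iff)
  show "diagonal_mat (transpose S ** M ** S)" if dM: "diagonal_mat M" for M :: "real^'n^'n"
  proof -
    have "(transpose S ** M ** S)$m$m' = s m * s m' * M$(\<sigma> m)$(\<sigma> m')" for m m'
    proof -
      have "(transpose S ** M)$m$k = s m * M$(\<sigma> m)$k" for k
      proof -
        have "(transpose S ** M)$m$k = (\<Sum>j\<in>UNIV. (if j = \<sigma> m then s m else 0) * M$j$k)"
          by (simp add: matrix_matrix_mult_def transpose_def S)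
        also have "\<dots> = (\<Sum>j\<in>UNIV. if j = \<sigma> m then s m * M$j$k else 0)"
          by (rule sum.cong) auto
        finally have "(transpose S ** M)$m$k = (\<Sum>j\<in>UNIV. if j = \<sigma> m then s m * M$j$k else 0)" .
        then show ?thesis by simp
      qed
      then show ?thesis using CS[of "transpose S ** M" m m'] by simp
    qed
    then show ?thesis using dM inj unfolding diagonal_mat_def by simp
  qed
qed

lemma triple_swap:
  fixes a b w :: "'n::finite \<Rightarrow> real" and c :: "'n \<Rightarrow> 'n \<Rightarrow> real"
  shows "(\<Sum>j\<in>UNIV. \<Sum>j'\<in>UNIV. a j * (\<Sum>p\<in>UNIV. w p * c p j * c p j') * b j')
    = (\<Sum>p\<in>UNIV. w p * (\<Sum>j\<in>UNIV. c p j * a j) * (\<Sum>j'\<in>UNIV. c p j' * b j'))"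
proof -
  have "(\<Sum>j\<in>UNIV. \<Sum>j'\<in>UNIV. a j * (\<Sum>p\<in>UNIV. w p * c p j * c p j') * b j')
      = (\<Sum>j\<in>UNIV. \<Sum>j'\<in>UNIV. \<Sum>p\<in>UNIV. w p * (c p j * a j) * (c p j' * b j'))"
    by (simp add: sum_distrib_left sum_distrib_right mult_ac)
  also have "\<dots> = (\<Sum>j\<in>UNIV. \<Sum>p\<in>UNIV. \<Sum>j'\<in>UNIV. w p * (c p j * a j) * (c p j' * b j'))"
    by (rule sum.cong[OF refl], rule sum.swap)
  also have "\<dots> = (\<Sum>p\<in>UNIV. \<Sum>j\<in>UNIV. \<Sum>j'\<in>UNIV. w p * (c p j * a j) * (c p j' * b j'))"
    by (rule sum.swap)
  also have "\<dots> = (\<Sum>p\<in>UNIV. w p * (\<Sum>j\<in>UNIV. c p j * a j) * (\<Sum>j'\<in>UNIV. c p j' * b j'))"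
    by (simp add: sum_distrib_left sum_distrib_right mult_ac)
  finally show ?thesis .
qed


lemma quad_G:
  fixes C F G :: "real^'n^'n" and lam :: "'n \<Rightarrow> real" and u :: "'n \<Rightarrow> real"
  assumes C: "orthogonal_matrix C"
    and G: "G = (\<chi> j j'. if F$j$j = F$j'$j' then (\<Sum>p\<in>UNIV. lam p * C$p$j * C$p$j') else 0)"
    and lam: "\<forall>p. 0 \<le> lam p \<and> lam p \<le> K"
    and u: "\<forall>j j'. u j \<noteq> 0 \<and> u j' \<noteq> 0 \<longrightarrow> F$j$j = F$j'$j'"
  shows "0 \<le> (\<Sum>j\<in>UNIV. \<Sum>j'\<in>UNIV. u j * G$j$j' * u j')"
    and "(\<Sum>j\<in>UNIV. \<Sum>j'\<in>UNIV. u j * G$j$j' * u j') \<le> K * (\<Sum>j\<in>UNIV. u j * u j)"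
proof -
  define v where "v p = (\<Sum>j\<in>UNIV. C$p$j * u j)" for p
  have "(\<Sum>j\<in>UNIV. \<Sum>j'\<in>UNIV. u j * G$j$j' * u j')
      = (\<Sum>j\<in>UNIV. \<Sum>j'\<in>UNIV. u j * (\<Sum>p\<in>UNIV. lam p * C$p$j * C$p$j') * u j')"
  proof (intro sum.cong refl)
    fix j j'
    show "u j * G$j$j' * u j' = u j * (\<Sum>p\<in>UNIV. lam p * C$p$j * C$p$j') * u j'"
      using u[rule_format, of j j'] by (cases "u j = 0 \<or> u j' = 0") (auto simp: G)
  qed
  also have "\<dots> = (\<Sum>p\<in>UNIV. lam p * v p * v p)"
    unfolding v_def by (rule triple_swap)
  finally have eq: "(\<Sum>j\<in>UNIV. \<Sum>j'\<in>UNIV. u j * G$j$j' * u j') = (\<Sum>p\<in>UNIV. lam p * v p * v p)" .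
  have vv: "(\<Sum>p\<in>UNIV. v p * v p) = (\<Sum>j\<in>UNIV. u j * u j)"
  proof -
    have "(\<Sum>p\<in>UNIV. v p * v p) = (\<Sum>j\<in>UNIV. \<Sum>j'\<in>UNIV. u j * (\<Sum>p\<in>UNIV. 1 * C$p$j * C$p$j') * u j')"
      unfolding v_def using triple_swap[of u "\<lambda>_. 1" "\<lambda>p j. C$p$j" u] by simp
    also have "\<dots> = (\<Sum>j\<in>UNIV. \<Sum>j'\<in>UNIV. if j' = j then u j * u j else 0)"
      using orth_cols[OF C] by (intro sum.cong refl) auto
    finally show ?thesis by simp
  qed
  show "0 \<le> (\<Sum>j\<in>UNIV. \<Sum>j'\<in>UNIV. u j * G$j$j' * u j')"
    unfolding eq using lam by (intro sum_nonneg) (simp add: mult.assoc)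
  have "(\<Sum>p\<in>UNIV. lam p * v p * v p) \<le> (\<Sum>p\<in>UNIV. K * (v p * v p))"
    using lam by (intro sum_mono) (simp add: mult.assoc mult_right_mono)
  also have "\<dots> = K * (\<Sum>j\<in>UNIV. u j * u j)" by (simp add: sum_distrib_left[symmetric] vv)
  finally show "(\<Sum>j\<in>UNIV. \<Sum>j'\<in>UNIV. u j * G$j$j' * u j') \<le> K * (\<Sum>j\<in>UNIV. u j * u j)"
    unfolding eq .
qed

lemma prod_small:
  fixes x y e :: real
  assumes "0 \<le> x" "0 \<le> y" "x \<le> 1" "y \<le> 1" "x \<le> e \<or> y \<le> e"
  shows "x * y \<le> e"
proof (cases "x \<le> e")
  case True
  have "x * y \<le> x * 1" using assms by (intro mult_left_mono) auto
  then show ?thesis using True by simp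
next
  case False
  then have "y \<le> e" using assms by auto
  have "x * y \<le> 1 * y" using assms by (intro mult_right_mono) auto
  then show ?thesis using \<open>y \<le> e\<close> by simp
qed

lemma CGC_bound:
  fixes C F G :: "real^'n^'n" and lam :: "'n \<Rightarrow> real"
  assumes C: "orthogonal_matrix C"
    and G: "G = (\<chi> j j'. if F$j$j = F$j'$j' then (\<Sum>p\<in>UNIV. lam p * C$p$j * C$p$j') else 0)"
    and lam: "\<forall>p. 0 \<le> lam p \<and> lam p \<le> real CARD('n)"
    and sm: "\<forall>p j j'. F$j$j \<noteq> F$j'$j' \<longrightarrow> \<bar>C$p$j\<bar> \<le> e \<or> \<bar>C$p$j'\<bar> \<le> e"
    and e: "e \<ge> 0"
  shows "\<bar>(C ** G ** transpose C)$i$i' - (if i = i' then lam i else 0)\<bar> \<le> real CARD('n)^4 * e"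
proof -
  define d where "d = real CARD('n)"
  define full where "full j j' = (\<Sum>p\<in>UNIV. lam p * C$p$j * C$p$j')" for j j'
  have lhs: "(C ** G ** transpose C)$i$i' = (\<Sum>j\<in>UNIV. \<Sum>j'\<in>UNIV. C$i$j * G$j$j' * C$i'$j')"
    by (simp add: matrix_matrix_mult_def transpose_def sum_distrib_right)
      (rule sum.swap)
  have rhs: "(if i = i' then lam i else 0) = (\<Sum>j\<in>UNIV. \<Sum>j'\<in>UNIV. C$i$j * full j j' * C$i'$j')"
  proof -
    have "(\<Sum>j\<in>UNIV. \<Sum>j'\<in>UNIV. C$i$j * full j j' * C$i'$j')
       = (\<Sum>p\<in>UNIV. lam p * (\<Sum>j\<in>UNIV. C$p$j * C$i$j) * (\<Sum>j'\<in>UNIV. C$p$j' * C$i'$j'))"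
      unfolding full_def by (rule triple_swap)
    also have "\<dots> = (\<Sum>p\<in>UNIV. if p = i then (if i = i' then lam i else 0) else 0)"
      using orth_rows[OF C] by (intro sum.cong refl) auto
    finally show ?thesis by simp
  qed
  have fb: "\<bar>full j j'\<bar> \<le> d * d * e" if "F$j$j \<noteq> F$j'$j'" for j j'
  proof -
    have "\<bar>full j j'\<bar> \<le> (\<Sum>p\<in>UNIV. \<bar>lam p * C$p$j * C$p$j'\<bar>)" unfolding full_def by (rule sum_abs)
    also have "\<dots> \<le> (\<Sum>p\<in>(UNIV::'n set). d * e)"
    proof (rule sum_mono)
      fix p
      have b1: "\<bar>C$p$j\<bar> \<le> 1" "\<bar>C$p$j'\<bar> \<le> 1" using orth_bound[OF C] by auto
      have "\<bar>C$p$j\<bar> * \<bar>C$p$j'\<bar> \<le> e" using sm[rule_format, OF that, of p] b1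
        by (intro prod_small) auto
      then have "\<bar>C$p$j * C$p$j'\<bar> \<le> e" by (simp add: abs_mult)
      then have "\<bar>lam p\<bar> * \<bar>C$p$j * C$p$j'\<bar> \<le> d * e" using lam unfolding d_def
        by (intro mult_mono) auto
      then show "\<bar>lam p * C$p$j * C$p$j'\<bar> \<le> d * e" by (simp add: abs_mult mult.assoc)
    qed
    also have "\<dots> = d * d * e" by (simp add: d_def)
    finally show ?thesis .
  qed
  have "(C ** G ** transpose C)$i$i' - (if i = i' then lam i else 0)
      = (\<Sum>j\<in>UNIV. \<Sum>j'\<in>UNIV. C$i$j * (G$j$j' - full j j') * C$i'$j')"
    unfolding lhs rhs by (simp add: sum_subtractf algebra_simps)
  also have "\<bar>\<dots>\<bar> \<le> (\<Sum>j\<in>UNIV. \<Sum>j'\<in>UNIV. \<bar>C$i$j * (G$j$j' - full j j') * C$i'$j'\<bar>)"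
    by (rule order_trans[OF sum_abs sum_mono[OF sum_abs]])
  also have "\<dots> \<le> (\<Sum>j\<in>(UNIV::'n set). \<Sum>j'\<in>(UNIV::'n set). d * d * e)"
  proof (intro sum_mono)
    fix j j'
    have b: "\<bar>C$i$j\<bar> \<le> 1" "\<bar>C$i'$j'\<bar> \<le> 1" using orth_bound[OF C] by auto
    have "\<bar>G$j$j' - full j j'\<bar> \<le> d * d * e"
      using fb[of j j'] e by (cases "F$j$j = F$j'$j'") (auto simp: G full_def d_def)
    moreover have "\<bar>C$i$j * (G$j$j' - full j j') * C$i'$j'\<bar> = \<bar>C$i$j\<bar> * \<bar>G$j$j' - full j j'\<bar> * \<bar>C$i'$j'\<bar>"
      by (simp add: abs_mult)
    moreover have "\<bar>C$i$j\<bar> * \<bar>G$j$j' - full j j'\<bar> * \<bar>C$i'$j'\<bar> \<le> 1 * (d * d * e) * 1"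
      using b calculation(1) by (intro mult_mono) auto
    ultimately show "\<bar>C$i$j * (G$j$j' - full j j') * C$i'$j'\<bar> \<le> d * d * e" by simp
  qed
  also have "\<dots> = d^4 * e" by (simp add: d_def power4_eq_xxxx)
  finally show ?thesis by (simp add: d_def)
qed


lemma block_eig:
  fixes F G R H :: "real^'n^'n" and \<tau> K :: real
  assumes dF: "diagonal_mat F" and dH: "diagonal_mat H" and oR: "orthogonal_matrix R"
    and Gm: "\<forall>j j'. F$j$j \<noteq> F$j'$j' \<longrightarrow> G$j$j' = 0"
    and quad: "\<forall>u. (\<forall>j j'. u j \<noteq> 0 \<and> u j' \<noteq> 0 \<longrightarrow> F$j$j = F$j'$j') \<longrightarrow>
        0 \<le> (\<Sum>j\<in>UNIV. \<Sum>j'\<in>UNIV. u j * G$j$j' * u j') \<and>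
        (\<Sum>j\<in>UNIV. \<Sum>j'\<in>UNIV. u j * G$j$j' * u j') \<le> K * (\<Sum>j\<in>UNIV. u j * u j)"
    and sep: "\<forall>j j'. F$j$j \<noteq> F$j'$j' \<longrightarrow> \<tau> * K < \<bar>F$j$j - F$j'$j'\<bar>"
    and tau: "\<tau> > 0"
    and Y: "F + \<tau> *\<^sub>R G = R ** H ** transpose R"
  shows "diagonal_mat (transpose R ** F ** R)"
proof -
  have RR: "transpose R ** R = mat 1" using oR unfolding orthogonal_matrix_def by simp
  have "(F + \<tau> *\<^sub>R G) ** R = (R ** H) ** (transpose R ** R)"
    unfolding Y by (simp only: matrix_mul_assoc)
  then have YR: "(F + \<tau> *\<^sub>R G) ** R = R ** H" by (simp add: RR)
  have E1: "F$j$j * R$j$m + \<tau> * (\<Sum>k\<in>UNIV. G$j$k * R$k$m) = H$m$m * R$j$m" for j m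
  proof -
    have "((F + \<tau> *\<^sub>R G) ** R)$j$m = (F ** R)$j$m + \<tau> * (\<Sum>k\<in>UNIV. G$j$k * R$k$m)"
      by (simp add: matrix_matrix_mult_def sum.distrib sum_distrib_left algebra_simps)
    then show ?thesis using YR diag_mult_left[OF dF, of R j m] diag_mult_right[OF dH, of R j m]
      by (simp add: mult.commute)
  qed
  have range: "0 \<le> H$m$m - F$j$j \<and> H$m$m - F$j$j \<le> \<tau> * K" if Rjm: "R$j$m \<noteq> 0" for j m
  proof -
    define \<nu> where "\<nu> = F$j$j"
    define u where "u k = (if F$k$k = \<nu> then R$k$m else 0)" for k
    have E2: "\<tau> * (\<Sum>k\<in>UNIV. G$i$k * u k) = (H$m$m - \<nu>) * u i" for i
    proof (cases "F$i$i = \<nu>")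
      case True
      have "(\<Sum>k\<in>UNIV. G$i$k * u k) = (\<Sum>k\<in>UNIV. G$i$k * R$k$m)"
        by (rule sum.cong) (use Gm True in \<open>auto simp: u_def\<close>)
      then show ?thesis using E1[of i m] True by (simp add: u_def algebra_simps)
    next
      case False
      have "(\<Sum>k\<in>UNIV. G$i$k * u k) = (\<Sum>k\<in>(UNIV::'n set). 0)"
        by (rule sum.cong) (use Gm False in \<open>auto simp: u_def\<close>)
      then show ?thesis using False by (simp add: u_def)
    qed
    have ublock: "\<forall>k k'. u k \<noteq> 0 \<and> u k' \<noteq> 0 \<longrightarrow> F$k$k = F$k'$k'"
      by (auto simp: u_def split: if_splits)
    have "\<tau> * (\<Sum>k\<in>UNIV. \<Sum>k'\<in>UNIV. u k * G$k$k' * u k') = (\<Sum>k\<in>UNIV. u k * (\<tau> * (\<Sum>k'\<in>UNIV. G$k$k' * u k')))"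
      by (simp add: sum_distrib_left mult_ac)
    also have "\<dots> = (\<Sum>k\<in>UNIV. (H$m$m - \<nu>) * (u k * u k))"
      by (rule sum.cong[OF refl]) (subst E2, simp add: mult_ac)
    also have "\<dots> = (H$m$m - \<nu>) * (\<Sum>k\<in>UNIV. u k * u k)" by (simp add: sum_distrib_left)
    finally have eq: "\<tau> * (\<Sum>k\<in>UNIV. \<Sum>k'\<in>UNIV. u k * G$k$k' * u k') = (H$m$m - \<nu>) * (\<Sum>k\<in>UNIV. u k * u k)" .
    have pos: "(\<Sum>k\<in>UNIV. u k * u k) > 0"
    proof -
      have "u j * u j > 0" using Rjm by (simp add: u_def \<nu>_def zero_less_mult_iff, linarith)
      moreover have "u j * u j \<le> (\<Sum>k\<in>UNIV. u k * u k)" by (rule member_le_sum) auto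
      ultimately show ?thesis by linarith
    qed
    have q: "0 \<le> (\<Sum>k\<in>UNIV. \<Sum>k'\<in>UNIV. u k * G$k$k' * u k')"
      "(\<Sum>k\<in>UNIV. \<Sum>k'\<in>UNIV. u k * G$k$k' * u k') \<le> K * (\<Sum>k\<in>UNIV. u k * u k)"
      using quad ublock by blast+
    have "0 \<le> (H$m$m - \<nu>) * (\<Sum>k\<in>UNIV. u k * u k)" 
    proof -
      have "0 \<le> \<tau> * (\<Sum>k\<in>UNIV. \<Sum>k'\<in>UNIV. u k * G$k$k' * u k')" using q(1) tau by simp
      then show ?thesis unfolding eq .
    qed
    then have a: "0 \<le> H$m$m - \<nu>" using pos by (simp add: zero_le_mult_iff)
    have "(H$m$m - \<nu>) * (\<Sum>k\<in>UNIV. u k * u k) \<le> (\<tau> * K) * (\<Sum>k\<in>UNIV. u k * u k)"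
    proof -
      have "\<tau> * (\<Sum>k\<in>UNIV. \<Sum>k'\<in>UNIV. u k * G$k$k' * u k') \<le> \<tau> * (K * (\<Sum>k\<in>UNIV. u k * u k))"
        by (rule mult_left_mono[OF q(2)]) (use tau in simp)
      then show ?thesis unfolding eq by (simp add: mult.assoc)
    qed
    then have b: "H$m$m - \<nu> \<le> \<tau> * K" using pos by simp
    show ?thesis using a b by (simp add: \<nu>_def)
  qed
  have same: "F$j$j = F$j'$j'" if "R$j$m \<noteq> 0" "R$j'$m \<noteq> 0" for j j' m
  proof (rule ccontr)
    assume ne: "F$j$j \<noteq> F$j'$j'"
    have "\<bar>F$j$j - F$j'$j'\<bar> \<le> \<tau> * K" using range[OF that(1)] range[OF that(2)] by linarith
    then show False using sep ne by force
  qed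
  show ?thesis unfolding diagonal_mat_def
  proof (intro allI impI)
    fix m m' :: 'n assume mm: "m \<noteq> m'"
    have ent: "(transpose R ** F ** R)$m$m' = (\<Sum>k\<in>UNIV. R$k$m * F$k$k * R$k$m')"
      using diag_mult_right[OF dF, of "transpose R"]
      by (simp add: matrix_matrix_mult_def transpose_def)
    show "(transpose R ** F ** R)$m$m' = 0"
    proof (cases "\<exists>j0. R$j0$m' \<noteq> 0")
      case True
      then obtain j0 where j0: "R$j0$m' \<noteq> 0" by blast
      have "(\<Sum>k\<in>UNIV. R$k$m * F$k$k * R$k$m') = (\<Sum>k\<in>UNIV. F$j0$j0 * (R$k$m * R$k$m'))"
        by (rule sum.cong) (use same[OF _ j0] in \<open>auto simp: mult_ac\<close>)
      also have "\<dots> = 0" using orth_cols[OF oR, of m m'] mm by (simp add: sum_distrib_left[symmetric])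
      finally show ?thesis using ent by simp
    next
      case False
      then show ?thesis using ent by simp
    qed
  qed
qed


lemma cluster:
  fixes D C F X :: "real^'n^'n" and g \<eta> :: real
  assumes dD: "diagonal_mat D" and oC: "orthogonal_matrix C" and dF: "diagonal_mat F"
    and X: "X = C ** F ** transpose C" and b: "\<forall>i j. \<bar>X$i$j - D$i$j\<bar> \<le> \<eta>"
    and gap: "\<forall>i j. D$i$i \<noteq> D$j$j \<longrightarrow> g \<le> \<bar>D$i$i - D$j$j\<bar>" and g: "g > 0"
    and small: "real CARD('n)^2 * \<eta> \<le> g/4"
    and cle: "card (range (\<lambda>j. F$j$j)) \<le> card (range (\<lambda>i. D$i$i))"
  shows "card (range (\<lambda>j. F$j$j)) = card (range (\<lambda>i. D$i$i))"
    and "\<forall>j j'. F$j$j \<noteq> F$j'$j' \<longrightarrow> g/2 \<le> \<bar>F$j$j - F$j'$j'\<bar>"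
    and "\<forall>p j j'. F$j$j \<noteq> F$j'$j' \<longrightarrow> \<bar>C$p$j\<bar> \<le> 2 * real CARD('n) * \<eta> / g \<or> \<bar>C$p$j'\<bar> \<le> 2 * real CARD('n) * \<eta> / g"
proof -
  define d where "d = real CARD('n)"
  define e1 where "e1 = d^2 * \<eta>"
  have d1: "d \<ge> 1" unfolding d_def by (rule card_pos_real)
  have e1g: "e1 \<le> g/4" using small unfolding e1_def d_def .
  have P: "\<bar>D$i$i - F$j$j\<bar> * \<bar>C$i$j\<bar> \<le> d * \<eta>" for i j
    unfolding d_def by (rule perturb[OF oC dF dD X b])
  have cob: "\<bar>D$i$i - F$j$j\<bar> \<le> e1" if big: "1 / d \<le> \<bar>C$i$j\<bar>" for i j
  proof -
    have "\<bar>D$i$i - F$j$j\<bar> * (1/d) \<le> \<bar>D$i$i - F$j$j\<bar> * \<bar>C$i$j\<bar>"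
      using big by (intro mult_left_mono) auto
    also have "\<dots> \<le> d * \<eta>" by (rule P)
    finally have "\<bar>D$i$i - F$j$j\<bar> \<le> d * \<eta> * d" using d1 by (simp add: divide_le_eq)
    then show ?thesis by (simp add: e1_def power2_eq_square mult_ac)
  qed
  have far: "\<bar>C$p$j\<bar> \<le> 2 * d * \<eta> / g" if fa: "g/2 \<le> \<bar>D$p$p - F$j$j\<bar>" for p j
  proof -
    have "g/2 * \<bar>C$p$j\<bar> \<le> \<bar>D$p$p - F$j$j\<bar> * \<bar>C$p$j\<bar>" using fa by (intro mult_right_mono) auto
    also have "\<dots> \<le> d * \<eta>" by (rule P)
    finally show ?thesis using g by (simp add: field_simps)
  qed
  have colnear: "\<exists>i. \<bar>D$i$i - F$j$j\<bar> \<le> e1" for j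
    using col_big[OF oC, of j] cob unfolding d_def by blast
  have rownear: "\<exists>j. \<bar>D$i$i - F$j$j\<bar> \<le> e1" for i
    using row_big[OF oC, of i] cob unfolding d_def by blast
  have uniq: "D$i$i = D$i'$i'" if "\<bar>D$i$i - v\<bar> \<le> e1" "\<bar>D$i'$i' - v\<bar> \<le> e1" for i i' v
  proof (rule ccontr)
    assume "D$i$i \<noteq> D$i'$i'"
    then have "g \<le> \<bar>D$i$i - D$i'$i'\<bar>" using gap by blast
    then show False using that e1g g by linarith
  qed
  define h where "h v = (SOME \<mu>. \<exists>i. \<mu> = D$i$i \<and> \<bar>\<mu> - v\<bar> \<le> e1)" for v
  have hF: "\<exists>i. h (F$j$j) = D$i$i \<and> \<bar>h (F$j$j) - F$j$j\<bar> \<le> e1" for j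
  proof -
    have "\<exists>\<mu>. \<exists>i. \<mu> = D$i$i \<and> \<bar>\<mu> - F$j$j\<bar> \<le> e1" using colnear[of j] by blast
    then show ?thesis unfolding h_def by (rule someI_ex[where P="\<lambda>\<mu>. \<exists>i. \<mu> = D$i$i \<and> \<bar>\<mu> - F$j$j\<bar> \<le> e1", THEN exE]) blast
  qed
  have himg: "h ` range (\<lambda>j. F$j$j) = range (\<lambda>i. D$i$i)"
  proof
    show "h ` range (\<lambda>j. F$j$j) \<subseteq> range (\<lambda>i. D$i$i)" using hF by fastforce
    show "range (\<lambda>i. D$i$i) \<subseteq> h ` range (\<lambda>j. F$j$j)"
    proof
      fix x assume "x \<in> range (\<lambda>i. D$i$i)"
      then obtain i where x: "x = D$i$i" by blast
      obtain j where j: "\<bar>D$i$i - F$j$j\<bar> \<le> e1" using rownear by blast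
      obtain i' where i': "h (F$j$j) = D$i'$i'" "\<bar>h (F$j$j) - F$j$j\<bar> \<le> e1" using hF by blast
      have "D$i'$i' = D$i$i" using uniq[of i' "F$j$j" i] i' j by simp
      then have "x = h (F$j$j)" using x i' by simp
      then show "x \<in> h ` range (\<lambda>j. F$j$j)" by blast
    qed
  qed
  have cge: "card (range (\<lambda>i. D$i$i)) \<le> card (range (\<lambda>j. F$j$j))"
    unfolding himg[symmetric] by (rule card_image_le) simp
  show ceq: "card (range (\<lambda>j. F$j$j)) = card (range (\<lambda>i. D$i$i))" using cle cge by simp
  have hinj: "inj_on h (range (\<lambda>j. F$j$j))"
    by (rule eq_card_imp_inj_on) (use ceq himg in simp_all)
  have hne: "h (F$j$j) \<noteq> h (F$j'$j')" if "F$j$j \<noteq> F$j'$j'" for j j'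
    using hinj that unfolding inj_on_def by blast
  show "\<forall>j j'. F$j$j \<noteq> F$j'$j' \<longrightarrow> g/2 \<le> \<bar>F$j$j - F$j'$j'\<bar>"
  proof (intro allI impI)
    fix j j' assume ne: "F$j$j \<noteq> F$j'$j'"
    obtain i where i: "h (F$j$j) = D$i$i" "\<bar>h (F$j$j) - F$j$j\<bar> \<le> e1" using hF by blast
    obtain i' where i': "h (F$j'$j') = D$i'$i'" "\<bar>h (F$j'$j') - F$j'$j'\<bar> \<le> e1" using hF by blast
    have "D$i$i \<noteq> D$i'$i'" using hne[OF ne] i i' by simp
    then have "g \<le> \<bar>D$i$i - D$i'$i'\<bar>" using gap by blast
    then show "g/2 \<le> \<bar>F$j$j - F$j'$j'\<bar>" using i i' e1g by linarith
  qed
  show "\<forall>p j j'. F$j$j \<noteq> F$j'$j' \<longrightarrow> \<bar>C$p$j\<bar> \<le> 2 * real CARD('n) * \<eta> / g \<or> \<bar>C$p$j'\<bar> \<le> 2 * real CARD('n) * \<eta> / g"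
  proof (intro allI impI)
    fix p j j' assume ne: "F$j$j \<noteq> F$j'$j'"
    obtain i where i: "h (F$j$j) = D$i$i" "\<bar>h (F$j$j) - F$j$j\<bar> \<le> e1" using hF by blast
    obtain i' where i': "h (F$j'$j') = D$i'$i'" "\<bar>h (F$j'$j') - F$j'$j'\<bar> \<le> e1" using hF by blast
    have "D$i$i \<noteq> D$i'$i'" using hne[OF ne] i i' by simp
    then have "D$p$p \<noteq> D$i$i \<or> D$p$p \<noteq> D$i'$i'" by auto
    then show "\<bar>C$p$j\<bar> \<le> 2 * real CARD('n) * \<eta> / g \<or> \<bar>C$p$j'\<bar> \<le> 2 * real CARD('n) * \<eta> / g"
    proof
      assume "D$p$p \<noteq> D$i$i"
      then have "g \<le> \<bar>D$p$p - D$i$i\<bar>" using gap by blast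
      then have "g/2 \<le> \<bar>D$p$p - F$j$j\<bar>" using i e1g by linarith
      then show ?thesis using far unfolding d_def by blast
    next
      assume "D$p$p \<noteq> D$i'$i'"
      then have "g \<le> \<bar>D$p$p - D$i'$i'\<bar>" using gap by blast
      then have "g/2 \<le> \<bar>D$p$p - F$j'$j'\<bar>" using i' e1g by linarith
      then show ?thesis using far unfolding d_def by blast
    qed
  qed
qed


lemma conj_back:
  fixes C M :: "real^'n^'n"
  assumes "orthogonal_matrix C"
  shows "transpose C ** (C ** M ** transpose C) ** C = M"
proof -
  have CC: "transpose C ** C = mat 1" using assms by (simp add: orthogonal_matrix_def)
  have l: "transpose C ** (C ** Z) = Z" for Z :: "real^'n^'n"
    by (simp add: matrix_mul_assoc CC)
  show ?thesis by (simp add: matrix_mul_assoc[symmetric] l CC)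
qed

lemma conj_fwd:
  fixes C M :: "real^'n^'n"
  assumes "orthogonal_matrix C"
  shows "C ** (transpose C ** M ** C) ** transpose C = M"
proof -
  have CC: "C ** transpose C = mat 1" using assms by (simp add: orthogonal_matrix_def)
  have l: "C ** (transpose C ** Z) = Z" for Z :: "real^'n^'n"
    by (simp add: matrix_mul_assoc CC)
  show ?thesis by (simp add: matrix_mul_assoc[symmetric] l CC)
qed

lemma conj_prod:
  fixes A B X :: "real^'n^'n"
  shows "transpose (A ** B) ** X ** (A ** B) = transpose B ** (transpose A ** X ** A) ** B"
  by (simp add: matrix_transpose_mul matrix_mul_assoc)

lemma conj_prod2:
  fixes A B M :: "real^'n^'n"
  shows "(A ** B) ** M ** transpose (A ** B) = A ** (B ** M ** transpose B) ** transpose A"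
  by (simp add: matrix_transpose_mul matrix_mul_assoc)

lemma conj_entry:
  fixes C M :: "real^'n^'n"
  shows "(C ** M ** transpose C)$i$i' = (\<Sum>j\<in>UNIV. \<Sum>j'\<in>UNIV. C$i$j * M$j$j' * C$i'$j')"
  by (simp add: matrix_matrix_mult_def transpose_def sum_distrib_right) (rule sum.swap)

lemma diag_sym:
  fixes F :: "real^'n^'n"
  assumes "diagonal_mat F"
  shows "F$i$j = F$j$i"
  using assms unfolding diagonal_mat_def by (cases "i = j") auto


lemma abs_rev_tri: fixes a b :: real shows "\<bar>a\<bar> - \<bar>b\<bar> \<le> \<bar>a + b\<bar>" by arith

lemma abs_tri2: fixes a b :: real shows "\<bar>a + b\<bar> \<le> \<bar>a\<bar> + \<bar>b\<bar>" by arith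

lemma core:
  fixes D :: "real^'n^'n" and \<epsilon> :: real
  assumes dD: "diagonal_mat D" and eps: "\<epsilon> > 0"
  shows "\<exists>\<eta>>0. \<forall>X. symmetric_matrix X \<longrightarrow> (\<forall>i j. \<bar>X$i$j - D$i$j\<bar> \<le> \<eta>) \<longrightarrow>
      (\<forall>C F. orthogonal_matrix C \<and> diagonal_mat F \<and> X = C ** F ** transpose C \<longrightarrow>
          card (range (\<lambda>j. F$j$j)) \<le> card (range (\<lambda>i. D$i$i))) \<longrightarrow>
      (\<forall>C F. orthogonal_matrix C \<and> diagonal_mat F \<and> X = C ** F ** transpose C \<longrightarrow>
          card (range (\<lambda>j. F$j$j)) = card (range (\<lambda>i. D$i$i))) \<and>
      (\<exists>C' F'. orthogonal_matrix C' \<and> diagonal_mat F' \<and> X = C' ** F' ** transpose C' \<and>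
          (\<forall>i. \<bar>D$i$i - F'$i$i\<bar> < \<epsilon>) \<and> (\<forall>i j. \<bar>C'$i$j - (mat 1 :: real^'n^'n)$i$j\<bar> < \<epsilon>))"
proof -
  define d where "d = real CARD('n)"
  have d1: "d \<ge> 1" unfolding d_def by (rule card_pos_real)
  define gset where "gset = (\<lambda>p. \<bar>D$(fst p)$(fst p) - D$(snd p)$(snd p)\<bar>) ` {p. D$(fst p)$(fst p) \<noteq> D$(snd p)$(snd p)}"
  define g where "g = Min (insert 1 gset)"
  have fing: "finite gset" unfolding gset_def by simp
  have g0: "g > 0" unfolding g_def using fing by (auto simp: gset_def)
  have gap: "\<forall>i j. D$i$i \<noteq> D$j$j \<longrightarrow> g \<le> \<bar>D$i$i - D$j$j\<bar>"
  proof (intro allI impI)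
    fix i j assume "D$i$i \<noteq> D$j$j"
    then have "\<bar>D$i$i - D$j$j\<bar> \<in> gset" unfolding gset_def by (auto intro!: image_eqI[where x="(i,j)"])
    then show "g \<le> \<bar>D$i$i - D$j$j\<bar>" unfolding g_def using fing by simp
  qed
  obtain ix :: "'n \<Rightarrow> nat" where ix: "bij_betw ix (UNIV::'n set) {0..<CARD('n)}"
    using ex_bij_betw_finite_nat[of "UNIV::'n set"] by auto
  define lam where "lam p = real (ix p)" for p
  have lam_b: "\<forall>p. 0 \<le> lam p \<and> lam p \<le> d"
  proof
    fix p
    have "ix p < CARD('n)" using ix by (auto simp: bij_betw_def)
    then show "0 \<le> lam p \<and> lam p \<le> d" by (simp add: lam_def d_def)
  qed
  have lam_sep: "1 \<le> \<bar>lam p - lam p'\<bar>" if "p \<noteq> p'" for p p'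
  proof -
    have "ix p \<noteq> ix p'" using ix that by (auto simp: bij_betw_def inj_on_def)
    then show ?thesis by (simp add: lam_def)
  qed
  define \<tau> where "\<tau> = g / (4 * d)"
  have tau0: "\<tau> > 0" using g0 d1 by (simp add: \<tau>_def)
  have taud: "\<tau> * d = g/4" using d1 by (simp add: \<tau>_def)
  define c3 where "c3 = 1 + \<tau> * d^4 * (2 * d / g)"
  define c4 where "c4 = 2 * d * c3 / \<tau>"
  have c3p: "c3 > 0" unfolding c3_def using tau0 d1 g0 by (simp add: add_pos_nonneg)
  have c4p: "c4 > 0" unfolding c4_def using c3p d1 tau0 by simp
  define \<eta> where "\<eta> = min (g/(4*d^2)) (min (\<tau>/(2*d^2*c3)) (min (1/(2*d*c4)) (min (\<epsilon>/(2*c4)) (\<epsilon>/(4*d)))))"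
  have eta0: "\<eta> > 0" unfolding \<eta>_def using g0 d1 tau0 c3p c4p eps by simp
  have h1: "d^2 * \<eta> \<le> g/4"
  proof -
    have "\<eta> \<le> g/(4*d^2)" unfolding \<eta>_def by linarith
    then show ?thesis using d1 by (simp add: field_simps)
  qed
  have h2: "d^2 * (c3 * \<eta>) \<le> \<tau>/2"
  proof -
    have "\<eta> \<le> \<tau>/(2*d^2*c3)" unfolding \<eta>_def by linarith
    then show ?thesis using d1 c3p by (simp add: field_simps)
  qed
  have h3: "c4 * \<eta> \<le> 1/(2*d)"
  proof -
    have "\<eta> \<le> 1/(2*d*c4)" unfolding \<eta>_def by linarith
    then show ?thesis using d1 c4p by (simp add: field_simps)
  qed
  have h4: "c4 * \<eta> \<le> \<epsilon>/2"
  proof -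
    have "\<eta> \<le> \<epsilon>/(2*c4)" unfolding \<eta>_def by linarith
    then show ?thesis using c4p by (simp add: field_simps)
  qed
  have h5: "2 * d * \<eta> \<le> \<epsilon>/2"
  proof -
    have "\<eta> \<le> \<epsilon>/(4*d)" unfolding \<eta>_def by linarith
    then show ?thesis using d1 by (simp add: field_simps)
  qed
  define e2 where "e2 = 2 * d * \<eta> / g"
  define e3 where "e3 = \<eta> + \<tau> * d^4 * e2"
  define e4 where "e4 = 2 * d * e3 / \<tau>"
  have e3c: "e3 = c3 * \<eta>" unfolding e3_def c3_def e2_def by (simp add: algebra_simps)
  have e4c: "e4 = c4 * \<eta>" unfolding e4_def c4_def e3c by simp
  have e2p: "e2 \<ge> 0" unfolding e2_def using eta0 g0 d1 by simp
  have e4s: "d * e4^2 \<le> 1/4"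
  proof -
    have a: "0 \<le> e4" "e4 \<le> 1/(2*d)" using h3 e4c c4p eta0 by simp_all
    have "e4^2 \<le> (1/(2*d))^2" using a by (intro power_mono) auto
    then have "d * e4^2 \<le> d * (1/(2*d))^2" using d1 by (intro mult_left_mono) auto
    also have "\<dots> = 1/(4*d)" using d1 by (simp add: power2_eq_square field_simps)
    also have "\<dots> \<le> 1/4" using d1 by (simp add: field_simps)
    finally show ?thesis .
  qed
  have e4eps: "e4 \<le> \<epsilon>/2" using h4 e4c by simp
  have e4sq: "d * e4^2 \<le> e4 / 2"
  proof -
    have a: "0 \<le> e4" "e4 \<le> 1/(2*d)" using h3 e4c c4p eta0 by simp_all
    have "d * e4^2 = (d * e4) * e4" by (simp add: power2_eq_square)
    also have "\<dots> \<le> (1/2) * e4" using a d1 by (intro mult_right_mono) (auto simp: field_simps)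
    finally show ?thesis by simp
  qed
  show ?thesis
  proof (intro exI[of _ \<eta>] conjI allI impI eta0)
    fix X :: "real^'n^'n"
    assume sX: "symmetric_matrix X" and bX: "\<forall>i j. \<bar>X$i$j - D$i$j\<bar> \<le> \<eta>"
      and cX: "\<forall>C F. orthogonal_matrix C \<and> diagonal_mat F \<and> X = C ** F ** transpose C \<longrightarrow>
          card (range (\<lambda>j. F$j$j)) \<le> card (range (\<lambda>i. D$i$i))"
    have small: "real CARD('n)^2 * \<eta> \<le> g/4" using h1 unfolding d_def .
    show "card (range (\<lambda>j. F$j$j)) = card (range (\<lambda>i. D$i$i))"
      if "orthogonal_matrix C \<and> diagonal_mat F \<and> X = C ** F ** transpose C" for C F
      using cluster(1)[OF dD _ _ _ bX gap g0 small] cX that by blast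
    obtain C F where oC: "orthogonal_matrix C" and dF: "diagonal_mat F" and XC: "X = C ** F ** transpose C"
      using spectral[OF sX] by blast
    have cl: "\<forall>j j'. F$j$j \<noteq> F$j'$j' \<longrightarrow> g/2 \<le> \<bar>F$j$j - F$j'$j'\<bar>"
       "\<forall>p j j'. F$j$j \<noteq> F$j'$j' \<longrightarrow> \<bar>C$p$j\<bar> \<le> e2 \<or> \<bar>C$p$j'\<bar> \<le> e2"
      using cluster(2,3)[OF dD oC dF XC bX gap g0 small] cX oC dF XC unfolding e2_def d_def by blast+
    define G :: "real^'n^'n" where "G = (\<chi> j j'. if F$j$j = F$j'$j' then (\<Sum>p\<in>UNIV. lam p * C$p$j * C$p$j') else 0)"
    define Y where "Y = F + \<tau> *\<^sub>R G"
    have Gsym: "G$j$j' = G$j'$j" for j j' unfolding G_def by (auto simp: mult_ac)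
    have sY: "symmetric_matrix Y"
      unfolding symmetric_matrix_def Y_def
      by (simp add: vec_eq_iff transpose_def Gsym diag_sym[OF dF])
    obtain R H where oR: "orthogonal_matrix R" and dH: "diagonal_mat H" and YR: "Y = R ** H ** transpose R"
      using spectral[OF sY] by blast
    have RFR: "diagonal_mat (transpose R ** F ** R)"
    proof (rule block_eig[OF dF dH oR, where G=G and \<tau>=\<tau> and K=d])
      show "\<forall>j j'. F$j$j \<noteq> F$j'$j' \<longrightarrow> G$j$j' = 0" by (simp add: G_def)
      show "\<forall>u. (\<forall>j j'. u j \<noteq> 0 \<and> u j' \<noteq> 0 \<longrightarrow> F$j$j = F$j'$j') \<longrightarrow>
        0 \<le> (\<Sum>j\<in>UNIV. \<Sum>j'\<in>UNIV. u j * G$j$j' * u j') \<and>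
        (\<Sum>j\<in>UNIV. \<Sum>j'\<in>UNIV. u j * G$j$j' * u j') \<le> d * (\<Sum>j\<in>UNIV. u j * u j)"
        using quad_G[OF oC G_def lam_b] by blast
      show "\<forall>j j'. F$j$j \<noteq> F$j'$j' \<longrightarrow> \<tau> * d < \<bar>F$j$j - F$j'$j'\<bar>"
        using cl(1) taud g0 by force
      show "\<tau> > 0" by (rule tau0)
      show "F + \<tau> *\<^sub>R G = R ** H ** transpose R" using YR by (simp add: Y_def)
    qed
    define C2 where "C2 = C ** R"
    have oC2: "orthogonal_matrix C2" unfolding C2_def using oC oR by (rule orthogonal_matrix_mul)
    define X2 where "X2 = C2 ** H ** transpose C2"
    have X2Y: "X2 = C ** Y ** transpose C" unfolding X2_def C2_def conj_prod2 YR ..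
    define D2 :: "real^'n^'n" where "D2 = (\<chi> i j. if i = j then D$i$i + \<tau> * lam i else 0)"
    have dD2: "diagonal_mat D2" by (simp add: D2_def diagonal_mat_def)
    have b2: "\<forall>i j. \<bar>X2$i$j - D2$i$j\<bar> \<le> e3"
    proof (intro allI)
      fix i i'
      have "X2$i$i' = X$i$i' + \<tau> * (C ** G ** transpose C)$i$i'"
        unfolding X2Y XC conj_entry Y_def
        by (simp add: algebra_simps sum.distrib sum_distrib_left)
      moreover have "D2$i$i' = D$i$i' + \<tau> * (if i = i' then lam i else 0)"
        using dD by (auto simp: D2_def diagonal_mat_def)
      ultimately have "X2$i$i' - D2$i$i' = (X$i$i' - D$i$i') + \<tau> * ((C ** G ** transpose C)$i$i' - (if i = i' then lam i else 0))"
        by (simp add: algebra_simps)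
      moreover have "\<bar>(C ** G ** transpose C)$i$i' - (if i = i' then lam i else 0)\<bar> \<le> d^4 * e2"
        using CGC_bound[OF oC G_def _ cl(2) e2p] lam_b unfolding d_def by blast
      ultimately have "\<bar>X2$i$i' - D2$i$i'\<bar> \<le> \<eta> + \<tau> * (d^4 * e2)"
      proof -
        assume eqx: "X2$i$i' - D2$i$i' = (X$i$i' - D$i$i') + \<tau> * ((C ** G ** transpose C)$i$i' - (if i = i' then lam i else 0))"
          and bb: "\<bar>(C ** G ** transpose C)$i$i' - (if i = i' then lam i else 0)\<bar> \<le> d^4 * e2"
        have t1: "\<bar>X2$i$i' - D2$i$i'\<bar> \<le> \<bar>X$i$i' - D$i$i'\<bar> + \<bar>\<tau> * ((C ** G ** transpose C)$i$i' - (if i = i' then lam i else 0))\<bar>"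
          unfolding eqx by (rule abs_tri2)
        have t2: "\<bar>\<tau> * ((C ** G ** transpose C)$i$i' - (if i = i' then lam i else 0))\<bar> = \<tau> * \<bar>(C ** G ** transpose C)$i$i' - (if i = i' then lam i else 0)\<bar>"
          using tau0 by (simp add: abs_mult)
        have t3: "\<tau> * \<bar>(C ** G ** transpose C)$i$i' - (if i = i' then lam i else 0)\<bar> \<le> \<tau> * (d^4 * e2)" using bb tau0 by (intro mult_left_mono) auto
        have t4: "\<bar>X$i$i' - D$i$i'\<bar> \<le> \<eta>" using bX by blast
        show ?thesis using t1 t2 t3 t4 by linarith
      qed
      then show "\<bar>X2$i$i' - D2$i$i'\<bar> \<le> e3" by (simp add: e3_def mult.assoc)
    qed
    have gap2: "\<forall>i i'. i \<noteq> i' \<longrightarrow> \<tau> \<le> \<bar>D2$i$i - D2$i'$i'\<bar>"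
    proof (intro allI impI)
      fix i i' :: 'n assume ne: "i \<noteq> i'"
      have ls: "1 \<le> \<bar>lam i - lam i'\<bar>" by (rule lam_sep[OF ne])
      have lb: "\<bar>lam i - lam i'\<bar> \<le> d"
      proof -
        have "0 \<le> lam i" "lam i \<le> d" "0 \<le> lam i'" "lam i' \<le> d" using lam_b by auto
        then show ?thesis by (simp add: abs_le_iff)
      qed
      have eq: "D2$i$i - D2$i'$i' = (D$i$i - D$i'$i') + \<tau> * (lam i - lam i')"
        by (simp add: D2_def algebra_simps)
      have t1: "\<tau> \<le> \<tau> * \<bar>lam i - lam i'\<bar>" using ls tau0 by simp
      have "\<tau> * \<bar>lam i - lam i'\<bar> \<le> \<tau> * d" using lb tau0 by (intro mult_left_mono) auto
      then have t2: "\<tau> * \<bar>lam i - lam i'\<bar> \<le> g/4" using taud by simp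
      have "\<tau> * 1 \<le> \<tau> * d" using d1 tau0 by (intro mult_left_mono) auto
      then have t3: "\<tau> \<le> g/4" using taud by simp
      show "\<tau> \<le> \<bar>D2$i$i - D2$i'$i'\<bar>"
      proof (cases "D$i$i = D$i'$i'")
        case True
        then have "D2$i$i - D2$i'$i' = \<tau> * (lam i - lam i')" using eq by simp
        then have "\<bar>D2$i$i - D2$i'$i'\<bar> = \<tau> * \<bar>lam i - lam i'\<bar>" using tau0 by (simp add: abs_mult)
        then show ?thesis using t1 by simp
      next
        case False
        then have "g \<le> \<bar>D$i$i - D$i'$i'\<bar>" using gap by blast
        moreover have "\<bar>D$i$i - D$i'$i'\<bar> - \<bar>\<tau> * (lam i - lam i')\<bar> \<le> \<bar>D2$i$i - D2$i'$i'\<bar>"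
          unfolding eq by (rule abs_rev_tri)
        moreover have "\<bar>\<tau> * (lam i - lam i')\<bar> = \<tau> * \<bar>lam i - lam i'\<bar>" using tau0 by (simp add: abs_mult)
        ultimately show ?thesis using t2 t3 by linarith
      qed
    qed
    have e3s: "real CARD('n)^2 * e3 \<le> \<tau>/2" using h2 e3c unfolding d_def by simp
    have e4s': "real CARD('n) * (2 * real CARD('n) * e3 / \<tau>)^2 \<le> 1/4" using e4s unfolding e4_def d_def .
    obtain \<sigma> s where bs: "bij \<sigma>" and s1: "\<forall>m. s m = 1 \<or> s m = -1"
      and s2: "\<forall>m. s m * C2$m$(\<sigma> m) \<ge> 1 - d * e4^2"
      and s3: "\<forall>i m. i \<noteq> m \<longrightarrow> \<bar>C2$i$(\<sigma> m)\<bar> \<le> e4"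
      using simple_pert[OF oC2 dH dD2 X2_def b2 gap2 tau0 e3s e4s'] unfolding d_def e4_def by blast
    define S :: "real^'n^'n" where "S = (\<chi> j m. if j = \<sigma> m then s m else 0)"
    note SP = signed_perm[OF bs s1 S_def]
    define C' where "C' = C2 ** S"
    have oC': "orthogonal_matrix C'" unfolding C'_def using oC2 SP(1) by (rule orthogonal_matrix_mul)
    define F' where "F' = transpose C' ** X ** C'"
    have F'eq: "F' = transpose S ** (transpose R ** F ** R) ** S"
      unfolding F'_def C'_def C2_def conj_prod XC conj_back[OF oC] ..
    have dF': "diagonal_mat F'" unfolding F'eq by (rule SP(2)[OF RFR])
    have XF': "X = C' ** F' ** transpose C'" unfolding F'_def conj_fwd[OF oC'] ..
    have C'e: "C'$i$m = C2$i$(\<sigma> m) * s m" for i m unfolding C'_def by (rule SP(3))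
    have diagC': "1 - d * e4^2 \<le> C'$m$m \<and> C'$m$m \<le> 1" for m
    proof -
      have "\<bar>C'$m$m\<bar> \<le> 1" by (rule orth_bound[OF oC'])
      then show ?thesis using s2 C'e[of m m] by (simp add: mult.commute)
    qed
    have offC': "\<bar>C'$i$m\<bar> \<le> e4" if "i \<noteq> m" for i m
      using s3 that C'e[of i m] s1 by (auto simp: abs_mult) (metis abs_minus_cancel abs_one mult.right_neutral mult_minus_right)
    have Fb: "\<forall>i. \<bar>D$i$i - F'$i$i\<bar> < \<epsilon>"
    proof
      fix i
      have P: "\<bar>D$i$i - F'$i$i\<bar> * \<bar>C'$i$i\<bar> \<le> d * \<eta>"
        unfolding d_def by (rule perturb[OF oC' dF' dD XF' bX])
      have "C'$i$i \<ge> 1/2" using diagC'[of i] e4s by linarith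
      then have "\<bar>D$i$i - F'$i$i\<bar> * (1/2) \<le> \<bar>D$i$i - F'$i$i\<bar> * \<bar>C'$i$i\<bar>"
        by (intro mult_left_mono) auto
      then have "\<bar>D$i$i - F'$i$i\<bar> * (1/2) \<le> d * \<eta>" using P by (rule order_trans)
      then have "\<bar>D$i$i - F'$i$i\<bar> \<le> 2 * d * \<eta>" by (simp add: field_simps)
      then show "\<bar>D$i$i - F'$i$i\<bar> < \<epsilon>" using h5 eps by linarith
    qed
    have Cb: "\<forall>i j. \<bar>C'$i$j - (mat 1 :: real^'n^'n)$i$j\<bar> < \<epsilon>"
    proof (intro allI)
      fix i j
      show "\<bar>C'$i$j - (mat 1 :: real^'n^'n)$i$j\<bar> < \<epsilon>"
      proof (cases "i = j")
        case True
        then show ?thesis using diagC'[of i] e4sq e4eps eps by (simp add: mat_def)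
      next
        case False
        then show ?thesis using offC'[OF False] e4eps eps by (simp add: mat_def)
      qed
    qed
    show "\<exists>C' F'. orthogonal_matrix C' \<and> diagonal_mat F' \<and> X = C' ** F' ** transpose C' \<and>
          (\<forall>i. \<bar>D$i$i - F'$i$i\<bar> < \<epsilon>) \<and> (\<forall>i j. \<bar>C'$i$j - (mat 1 :: real^'n^'n)$i$j\<bar> < \<epsilon>)"
      using oC' dF' XF' Fb Cb by blast
  qed
qed


lemma conj_diff_bound:
  fixes C M N :: "real^'n^'n"
  assumes oC: "orthogonal_matrix C" and b: "\<forall>k l. \<bar>M$k$l - N$k$l\<bar> \<le> \<delta>"
  shows "\<bar>(C ** M ** transpose C)$i$j - (C ** N ** transpose C)$i$j\<bar> \<le> real CARD('n)^2 * \<delta>"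
proof -
  have d0: "0 \<le> \<delta>" using b abs_ge_zero order_trans by blast
  have "(C ** M ** transpose C)$i$j - (C ** N ** transpose C)$i$j
      = (\<Sum>k\<in>UNIV. \<Sum>l\<in>UNIV. C$i$k * (M$k$l - N$k$l) * C$j$l)"
    unfolding conj_entry by (simp add: sum_subtractf algebra_simps)
  also have "\<bar>\<dots>\<bar> \<le> (\<Sum>k\<in>UNIV. \<Sum>l\<in>UNIV. \<bar>C$i$k * (M$k$l - N$k$l) * C$j$l\<bar>)"
    by (rule order_trans[OF sum_abs sum_mono[OF sum_abs]])
  also have "\<dots> \<le> (\<Sum>k\<in>(UNIV::'n set). \<Sum>l\<in>(UNIV::'n set). \<delta>)"
  proof (intro sum_mono)
    fix k l
    have "\<bar>C$i$k * (M$k$l - N$k$l) * C$j$l\<bar> = \<bar>C$i$k\<bar> * \<bar>M$k$l - N$k$l\<bar> * \<bar>C$j$l\<bar>"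
      by (simp add: abs_mult)
    also have "\<dots> \<le> 1 * \<delta> * 1"
      using orth_bound[OF oC, of i k] orth_bound[OF oC, of j l] b d0
      by (intro mult_mono) auto
    finally show "\<bar>C$i$k * (M$k$l - N$k$l) * C$j$l\<bar> \<le> \<delta>" by simp
  qed
  also have "\<dots> = real CARD('n)^2 * \<delta>" by (simp add: power2_eq_square)
  finally show ?thesis .
qed

theorem lemma3p3:
  fixes r :: nat and ls :: "nat \<Rightarrow> nat" and l :: nat
    and A P D :: "real^'n^'n"
  assumes "CARD('n) \<ge> 2"
    and "r \<ge> 1"
    and "\<forall>j\<in>{1..r}. ls j \<in> {1..CARD('n)}"
    and "(\<Sum>j=1..r. ls j) \<le> CARD('n)"
    and "int l = int CARD('n) - (\<Sum>j=1..r. (int (ls j) - 1))"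
    and "A \<in> S_set r ls"
    and "orthogonal_matrix P" and "diagonal_mat D"
    and "A = P ** D ** transpose P"
    and "num_distinct_eigs A = l"
  shows "\<forall>\<epsilon>>0. \<exists>\<delta>>0. \<forall>B \<in> S_set r ls.
           (\<forall>i j. \<bar>A $ i $ j - B $ i $ j\<bar> < \<delta>) \<longrightarrow>
           num_distinct_eigs B = l \<and>
           (\<exists>Q F. orthogonal_matrix Q \<and> diagonal_mat F \<and> B = Q ** F ** transpose Q \<and>
              (\<forall>i. \<bar>D $ i $ i - F $ i $ i\<bar> < \<epsilon>) \<and>
              (\<forall>i j. \<bar>Q $ i $ j - P $ i $ j\<bar> < \<epsilon>))"
proof (intro allI impI)
  fix \<epsilon> :: real assume eps: "\<epsilon> > 0"
  note ls1 = assms(3) and lint = assms(5) and oP = assms(7) and dD = assms(8) and AP = assms(9)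
    and nA = assms(10)
  have ls1': "\<forall>j\<in>{1..r}. ls j \<ge> 1" using ls1 by auto
  define d where "d = real CARD('n)"
  have d1: "d \<ge> 1" unfolding d_def by (rule card_pos_real)
  define \<epsilon>' where "\<epsilon>' = \<epsilon> / d"
  have eps': "\<epsilon>' > 0" using eps d1 by (simp add: \<epsilon>'_def)
  have eps'le: "\<epsilon>' \<le> \<epsilon>" using eps d1 by (simp add: \<epsilon>'_def field_simps)
  obtain \<eta> where eta: "\<eta> > 0" and core': "\<forall>X. symmetric_matrix X \<longrightarrow> (\<forall>i j. \<bar>X$i$j - D$i$j\<bar> \<le> \<eta>) \<longrightarrow>
      (\<forall>C F. orthogonal_matrix C \<and> diagonal_mat F \<and> X = C ** F ** transpose C \<longrightarrow>
          card (range (\<lambda>j. F$j$j)) \<le> card (range (\<lambda>i. D$i$i))) \<longrightarrow>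
      (\<forall>C F. orthogonal_matrix C \<and> diagonal_mat F \<and> X = C ** F ** transpose C \<longrightarrow>
          card (range (\<lambda>j. F$j$j)) = card (range (\<lambda>i. D$i$i))) \<and>
      (\<exists>C' F'. orthogonal_matrix C' \<and> diagonal_mat F' \<and> X = C' ** F' ** transpose C' \<and>
          (\<forall>i. \<bar>D$i$i - F'$i$i\<bar> < \<epsilon>') \<and> (\<forall>i j. \<bar>C'$i$j - (mat 1 :: real^'n^'n)$i$j\<bar> < \<epsilon>'))"
    using core[OF dD eps'] by blast
  have lD: "card (range (\<lambda>i. D$i$i)) = l"
    using nA eig_conj(1)[OF oP dD AP] by (simp add: num_distinct_eigs_def)
  define \<delta> where "\<delta> = \<eta> / d^2"
  have delta: "\<delta> > 0" using eta d1 by (simp add: \<delta>_def)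
  show "\<exists>\<delta>>0. \<forall>B \<in> S_set r ls.
           (\<forall>i j. \<bar>A $ i $ j - B $ i $ j\<bar> < \<delta>) \<longrightarrow>
           num_distinct_eigs B = l \<and>
           (\<exists>Q F. orthogonal_matrix Q \<and> diagonal_mat F \<and> B = Q ** F ** transpose Q \<and>
              (\<forall>i. \<bar>D $ i $ i - F $ i $ i\<bar> < \<epsilon>) \<and>
              (\<forall>i j. \<bar>Q $ i $ j - P $ i $ j\<bar> < \<epsilon>))"
  proof (intro exI[of _ \<delta>] conjI delta ballI impI)
    fix B :: "real^'n^'n" assume BS: "B \<in> S_set r ls" and AB: "\<forall>i j. \<bar>A $ i $ j - B $ i $ j\<bar> < \<delta>"
    have sB: "transpose B = B" using BS by (simp add: S_set_def symmetric_matrix_def)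
    define X where "X = transpose P ** B ** P"
    have DA: "D = transpose P ** A ** P" unfolding AP conj_back[OF oP] ..
    have BX: "B = P ** X ** transpose P" unfolding X_def conj_fwd[OF oP] ..
    have sX: "symmetric_matrix X" unfolding symmetric_matrix_def X_def
      by (simp add: matrix_transpose_mul sB matrix_mul_assoc)
    have bX: "\<forall>i j. \<bar>X$i$j - D$i$j\<bar> \<le> \<eta>"
    proof (intro allI)
      fix i j
      have oPt: "orthogonal_matrix (transpose P)" using oP by simp
      have "\<forall>k l. \<bar>B$k$l - A$k$l\<bar> \<le> \<delta>" using AB by (metis abs_minus_commute less_imp_le)
      from conj_diff_bound[OF oPt this, of i j]
      have "\<bar>X$i$j - D$i$j\<bar> \<le> real CARD('n)^2 * \<delta>" unfolding X_def DA by simp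
      also have "\<dots> = \<eta>" using d1 by (simp add: \<delta>_def d_def)
      finally show "\<bar>X$i$j - D$i$j\<bar> \<le> \<eta>" .
    qed
    have Bdec: "B = (P ** C) ** F ** transpose (P ** C)" if "X = C ** F ** transpose C" for C F :: "real^'n^'n"
      using conj_prod2[of P C F] BX that by simp
    have cX: "\<forall>C F. orthogonal_matrix C \<and> diagonal_mat F \<and> X = C ** F ** transpose C \<longrightarrow>
          card (range (\<lambda>j. F$j$j)) \<le> card (range (\<lambda>i. D$i$i))"
    proof (intro allI impI)
      fix C F :: "real^'n^'n" assume h: "orthogonal_matrix C \<and> diagonal_mat F \<and> X = C ** F ** transpose C"
      have oPC: "orthogonal_matrix (P ** C)" using oP h by (simp add: orthogonal_matrix_mul)
      have e1: "set (eig_list B) = range (\<lambda>j. F$j$j)" and e2: "length (eig_list B) = CARD('n)"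
        using eig_conj[OF oPC _ Bdec] h by auto
      have "card (set (eig_list B)) \<le> l" by (rule S_card[OF BS e2 ls1' lint])
      then show "card (range (\<lambda>j. F$j$j)) \<le> card (range (\<lambda>i. D$i$i))" using e1 lD by simp
    qed
    have cc: "(\<forall>C F. orthogonal_matrix C \<and> diagonal_mat F \<and> X = C ** F ** transpose C \<longrightarrow>
          card (range (\<lambda>j. F$j$j)) = card (range (\<lambda>i. D$i$i))) \<and>
      (\<exists>C' F'. orthogonal_matrix C' \<and> diagonal_mat F' \<and> X = C' ** F' ** transpose C' \<and>
          (\<forall>i. \<bar>D$i$i - F'$i$i\<bar> < \<epsilon>') \<and> (\<forall>i j. \<bar>C'$i$j - (mat 1 :: real^'n^'n)$i$j\<bar> < \<epsilon>'))"
      by (rule core'[rule_format, OF sX bX[rule_format] cX[rule_format]])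
    note ceq = conjunct1[OF cc]
    obtain C' F' where hh: "orthogonal_matrix C' \<and> diagonal_mat F' \<and> X = C' ** F' ** transpose C' \<and>
          (\<forall>i. \<bar>D$i$i - F'$i$i\<bar> < \<epsilon>') \<and> (\<forall>i j. \<bar>C'$i$j - (mat 1 :: real^'n^'n)$i$j\<bar> < \<epsilon>')"
      using conjunct2[OF cc] by blast
    have oC': "orthogonal_matrix C'" and dF': "diagonal_mat F'" and XC': "X = C' ** F' ** transpose C'"
      and Fb: "\<forall>i. \<bar>D$i$i - F'$i$i\<bar> < \<epsilon>'" and Cb: "\<forall>i j. \<bar>C'$i$j - (mat 1 :: real^'n^'n)$i$j\<bar> < \<epsilon>'"
      using hh by blast+
    define Q where "Q = P ** C'"
    have oQ: "orthogonal_matrix Q" unfolding Q_def using oP oC' by (rule orthogonal_matrix_mul)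
    have BQ: "B = Q ** F' ** transpose Q" unfolding Q_def by (rule Bdec[OF XC'])
    have "num_distinct_eigs B = card (range (\<lambda>j. F'$j$j))"
      using eig_conj(1)[OF oQ dF' BQ] by (simp add: num_distinct_eigs_def)
    also have "\<dots> = card (range (\<lambda>i. D$i$i))" using ceq oC' dF' XC' by blast
    also have "\<dots> = l" by (rule lD)
    finally have nB: "num_distinct_eigs B = l" .
    have Fb2: "\<forall>i. \<bar>D$i$i - F'$i$i\<bar> < \<epsilon>" using Fb eps'le by (meson less_le_trans)
    have Qb: "\<forall>i j. \<bar>Q$i$j - P$i$j\<bar> < \<epsilon>"
    proof (intro allI)
      fix i j
      have "Q$i$j - P$i$j = (\<Sum>k\<in>UNIV. P$i$k * (C'$k$j - (mat 1 :: real^'n^'n)$k$j))"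
      proof -
        have "(\<Sum>k\<in>UNIV. P$i$k * (mat 1 :: real^'n^'n)$k$j) = P$i$j"
          by (simp add: mat_def if_distrib cong: if_cong)
        then show ?thesis unfolding Q_def
          by (simp add: matrix_matrix_mult_def right_diff_distrib sum_subtractf)
      qed
      also have "\<bar>\<dots>\<bar> \<le> (\<Sum>k\<in>UNIV. \<bar>P$i$k * (C'$k$j - (mat 1 :: real^'n^'n)$k$j)\<bar>)" by (rule sum_abs)
      also have "\<dots> < (\<Sum>k\<in>(UNIV::'n set). \<epsilon>')"
      proof (rule sum_strict_mono)
        fix k
        have "\<bar>P$i$k * (C'$k$j - (mat 1 :: real^'n^'n)$k$j)\<bar> \<le> 1 * \<bar>C'$k$j - (mat 1 :: real^'n^'n)$k$j\<bar>"
          unfolding abs_mult using orth_bound[OF oP, of i k] by (intro mult_right_mono) auto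
        then show "\<bar>P$i$k * (C'$k$j - (mat 1 :: real^'n^'n)$k$j)\<bar> < \<epsilon>'" using Cb[rule_format, of k j] by simp
      qed auto
      also have "\<dots> = \<epsilon>" using d1 by (simp add: \<epsilon>'_def d_def)
      finally show "\<bar>Q$i$j - P$i$j\<bar> < \<epsilon>" .
    qed
    show "num_distinct_eigs B = l" by (rule nB)
    show "\<exists>Q F. orthogonal_matrix Q \<and> diagonal_mat F \<and> B = Q ** F ** transpose Q \<and>
              (\<forall>i. \<bar>D $ i $ i - F $ i $ i\<bar> < \<epsilon>) \<and>
              (\<forall>i j. \<bar>Q $ i $ j - P $ i $ j\<bar> < \<epsilon>)"
      using oQ dF' BQ Fb2 Qb by blast
  qed
qed


end
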